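(* Assume $M,K\in\mathbb{R}^{m\times m}$ are symmetric positive definite, $\nu>0$, $\omega\in\mathbb{R}$, and $\alpha>0$. Let $\eta=\sqrt{\nu}/\sqrt{1+\nu\omega^2}$, $\mathcal M=\mathrm{diag}(M,M,M,M)$, $\mathcal K=\eta\,\mathrm{diag}(K,K,K,K)$, $\mathcal G$ as below, and \[ \mathcal T_\alpha=(\alpha I+\mathcal K)^{-1}(\alpha I+\mathcal G\mathcal M)(\alpha I+\mathcal M)^{-1}(\alpha I-\mathcal G\mathcal K). \] Then \[ \rho(\mathcal T_\alpha)\le\gamma(\alpha):=\max_{\mu\in\sigma(M)}\frac{\sqrt{\alpha^2+\mu^2}}{\alpha+\mu}\;\max_{\lambda\in\sigma(K)}\frac{\sqrt{\alpha^2+(\eta\lambda)^2}}{\alpha+\eta\lambda}<1 . \] In particular the ASSS iteration $\mathbf x^{(k+1)}=\mathcal T_\alpha\mathbf x^{(k)}+\mathbf f$ converges for every $\alpha>0$ and every initial guess.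
   Context: $I$ denotes an identity matrix of appropriate size. $\mathcal G=\frac{1}{\sqrt{\nu(1+\nu\omega^2)}}\begin{pmatrix} 0&\omega\nu I&\sqrt{\nu}I&0\\ -\omega\nu I&0&0&\sqrt{\nu}I\\ -\sqrt{\nu}I&0&0&-\omega\nu I\\ 0&-\sqrt{\nu}I&\omega\nu I&0\end{pmatrix}$ with $m\times m$ identity blocks. $\mathrm{diag}(\cdot)$ is block diagonal, $\sigma(\cdot)$ is the spectrum and $\rho(\cdot)$ the spectral radius. The ASSS iteration for $(\mathcal M+\mathcal G\mathcal K)\mathbf x=\mathbf b$ is $(\alpha I+\mathcal M)\mathbf x^{(k+1/2)}=(\alpha I-\mathcal G\mathcal K)\mathbf x^{(k)}+\mathbf b$, $(\alpha I+\mathcal K)\mathbf x^{(k+1)}=(\alpha I+\mathcal G\mathcal M)\mathbf x^{(k+1/2)}-\mathcal G\mathbf b$, which equals $\mathbf x^{(k+1)}=\mathcal T_\alpha\mathbf x^{(k)}+\mathbf f$ with $\mathbf f=\alpha(\alpha I+\mathcal K)^{-1}(I-\mathcal G)(\alpha I+\mathcal M)^{-1}\mathbf b$. *)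

theory Defs
  imports "Jordan_Normal_Form.Spectral_Radius" "Jordan_Normal_Form.Gauss_Jordan_Elimination"
begin

definition sym_pos_def_mat :: "nat \<Rightarrow> real mat \<Rightarrow> bool" where
  "sym_pos_def_mat n A \<longleftrightarrow> A \<in> carrier_mat n n \<and> transpose_mat A = A \<and>
     (\<forall>x \<in> carrier_vec n. x \<noteq> 0\<^sub>v n \<longrightarrow> x \<bullet> (A *\<^sub>v x) > 0)"

definition minv :: "real mat \<Rightarrow> real mat" where
  "minv A = the (mat_inverse A)"

definition G_mat :: "nat \<Rightarrow> real \<Rightarrow> real \<Rightarrow> real mat" where
  "G_mat m \<nu> \<omega> =
    (let I = (1\<^sub>m m :: real mat); Z = (0\<^sub>m m m :: real mat);
         a = \<omega> * \<nu>; s = sqrt \<nu> in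
     (1 / sqrt (\<nu> * (1 + \<nu> * \<omega>^2))) \<cdot>\<^sub>m
       four_block_mat
         (four_block_mat Z (a \<cdot>\<^sub>m I) ((- a) \<cdot>\<^sub>m I) Z)
         (four_block_mat (s \<cdot>\<^sub>m I) Z Z (s \<cdot>\<^sub>m I))
         (four_block_mat ((- s) \<cdot>\<^sub>m I) Z Z ((- s) \<cdot>\<^sub>m I))
         (four_block_mat Z ((- a) \<cdot>\<^sub>m I) (a \<cdot>\<^sub>m I) Z))"

definition asss_iterates :: "real mat \<Rightarrow> real vec \<Rightarrow> real vec \<Rightarrow> nat \<Rightarrow> real vec" where
  "asss_iterates T f x0 k = ((\<lambda>x. T *\<^sub>v x + f) ^^ k) x0"

end

theory Submission
  imports Defs
begin

lemma sp_self_nonneg: "(v::real vec) \<bullet> v \<ge> 0"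
  unfolding scalar_prod_def by (auto intro: sum_nonneg)

lemma sp_self_eq0: assumes "(v::real vec) \<bullet> v = 0" shows "v = 0\<^sub>v (dim_vec v)"
proof (rule eq_vecI)
  fix i assume i: "i < dim_vec (0\<^sub>v (dim_vec v))"
  have "(\<Sum>j\<in>{0..<dim_vec v}. v $ j * v $ j) = 0" using assms unfolding scalar_prod_def by simp
  hence "\<forall>j\<in>{0..<dim_vec v}. v $ j * v $ j = 0"
    by (subst sum_nonneg_eq_0_iff[symmetric], auto)
  thus "v $ i = 0\<^sub>v (dim_vec v) $ i" using i by auto
qed auto

lemma sp_comp_le: assumes "i < dim_vec (v::real vec)" shows "(v $ i)^2 \<le> v \<bullet> v"
proof -
  have "(v $ i)^2 = (\<Sum>j\<in>{i}. v $ j * v $ j)" by (simp add: power2_eq_square)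
  also have "\<dots> \<le> (\<Sum>j\<in>{0..<dim_vec v}. v $ j * v $ j)"
    by (rule sum_mono2, insert assms, auto)
  finally show ?thesis unfolding scalar_prod_def by simp
qed

lemma cauchy_schwarz_vec: assumes x: "(x::real vec) \<in> carrier_vec n" and y: "y \<in> carrier_vec n"
  shows "(x \<bullet> y)^2 \<le> (x \<bullet> x) * (y \<bullet> y)"
proof (cases "y \<bullet> y = 0")
  case True
  hence "y = 0\<^sub>v n" using sp_self_eq0[of y] y by auto
  thus ?thesis using x by (simp add: sp_self_nonneg)
next
  case False
  hence yy: "y \<bullet> y > 0" using sp_self_nonneg[of y] by auto
  define t where "t = (x \<bullet> y) / (y \<bullet> y)"
  have "0 \<le> (x - t \<cdot>\<^sub>v y) \<bullet> (x - t \<cdot>\<^sub>v y)" by (rule sp_self_nonneg)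
  also have "\<dots> = x \<bullet> x - 2 * t * (x \<bullet> y) + t^2 * (y \<bullet> y)"
    using x y by (simp add: minus_scalar_prod_distrib scalar_prod_minus_distrib comm_scalar_prod[of y n x] power2_eq_square algebra_simps)
  also have "\<dots> = x \<bullet> x - (x \<bullet> y)^2 / (y \<bullet> y)" using yy unfolding t_def by (simp add: field_simps power2_eq_square)
  finally show ?thesis using yy by (simp add: field_simps)
qed

lemma re_mult_vec: assumes S: "(S::real mat) \<in> carrier_mat n n" and v: "v \<in> carrier_vec n"
  shows "map_vec Re (map_mat complex_of_real S *\<^sub>v v) = S *\<^sub>v map_vec Re v"
    "map_vec Im (map_mat complex_of_real S *\<^sub>v v) = S *\<^sub>v map_vec Im v"
proof -
  show "map_vec Re (map_mat complex_of_real S *\<^sub>v v) = S *\<^sub>v map_vec Re v"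
    by (rule eq_vecI, insert S v, auto simp: scalar_prod_def Re_sum)
  show "map_vec Im (map_mat complex_of_real S *\<^sub>v v) = S *\<^sub>v map_vec Im v"
    by (rule eq_vecI, insert S v, auto simp: scalar_prod_def Im_sum)
qed

lemma sym_real_eig: assumes S: "(S::real mat) \<in> carrier_mat n n" and sym: "transpose_mat S = S"
  and ev: "eigenvalue (map_mat complex_of_real S) z"
  shows "eigenvalue S (Re z) \<and> z = complex_of_real (Re z)"
proof -
  from ev obtain v where v: "v \<in> carrier_vec n" "v \<noteq> 0\<^sub>v n" "map_mat complex_of_real S *\<^sub>v v = z \<cdot>\<^sub>v v"
    unfolding eigenvalue_def eigenvector_def using S by auto
  define a where "a = map_vec Re v"
  define b where "b = map_vec Im v"
  have a: "a \<in> carrier_vec n" and b: "b \<in> carrier_vec n" unfolding a_def b_def using v by auto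
  have Sa: "S *\<^sub>v a = Re z \<cdot>\<^sub>v a - Im z \<cdot>\<^sub>v b"
    unfolding a_def re_mult_vec(1)[OF S v(1), symmetric] v(3) unfolding b_def
    by (intro eq_vecI, auto)
  have Sb: "S *\<^sub>v b = Im z \<cdot>\<^sub>v a + Re z \<cdot>\<^sub>v b"
    unfolding b_def re_mult_vec(2)[OF S v(1), symmetric] v(3) unfolding a_def
    by (intro eq_vecI, auto)
  have "(transpose_mat S *\<^sub>v a) \<bullet> b = a \<bullet> (S *\<^sub>v b)"
    by (rule transpose_vec_mult_scalar[OF S b a])
  hence eq: "(S *\<^sub>v a) \<bullet> b = a \<bullet> (S *\<^sub>v b)" unfolding sym .
  have "(S *\<^sub>v a) \<bullet> b = Re z * (a \<bullet> b) - Im z * (b \<bullet> b)"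
    unfolding Sa using a b by (simp add: minus_scalar_prod_distrib)
  moreover have "a \<bullet> (S *\<^sub>v b) = Im z * (a \<bullet> a) + Re z * (a \<bullet> b)"
    unfolding Sb using a b by (simp add: scalar_prod_add_distrib)
  ultimately have "Im z * (a \<bullet> a + b \<bullet> b) = 0" using eq by (simp add: algebra_simps)
  moreover have "a \<bullet> a + b \<bullet> b \<noteq> 0"
  proof
    assume "a \<bullet> a + b \<bullet> b = 0"
    hence "a \<bullet> a = 0" "b \<bullet> b = 0" using sp_self_nonneg[of a] sp_self_nonneg[of b] by auto
    hence "a = 0\<^sub>v n" "b = 0\<^sub>v n" using sp_self_eq0[of a] sp_self_eq0[of b] a b by auto
    have "v = 0\<^sub>v n"
    proof (rule eq_vecI)
      fix i assume "i < dim_vec (0\<^sub>v n :: complex vec)"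
      hence i: "i < n" by simp
      have "a $ i = 0" "b $ i = 0" using \<open>a = 0\<^sub>v n\<close> \<open>b = 0\<^sub>v n\<close> i by auto
      hence "Re (v $ i) = 0" "Im (v $ i) = 0" unfolding a_def b_def using i v(1) by auto
      thus "v $ i = 0\<^sub>v n $ i" using i by (simp add: complex_eq_iff)
    qed (insert v(1), auto)
    with v(2) show False by simp
  qed
  ultimately have imz: "Im z = 0" by simp
  have "a \<noteq> 0\<^sub>v n \<or> b \<noteq> 0\<^sub>v n" using \<open>a \<bullet> a + b \<bullet> b \<noteq> 0\<close> a b by auto
  moreover have "S *\<^sub>v a = Re z \<cdot>\<^sub>v a" "S *\<^sub>v b = Re z \<cdot>\<^sub>v b" using Sa Sb imz a b by auto
  ultimately have "eigenvalue S (Re z)" unfolding eigenvalue_def eigenvector_def using S a b by auto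
  thus ?thesis using imz by (simp add: complex_eq_iff)
qed

lemma smult_mult_mat_vec: assumes "A \<in> carrier_mat n n" "v \<in> carrier_vec n"
  shows "(c \<cdot>\<^sub>m A) *\<^sub>v v = c \<cdot>\<^sub>v (A *\<^sub>v (v :: 'a :: comm_ring_1 vec))"
  by (rule eq_vecI, insert assms, auto simp: scalar_prod_def sum_distrib_left ac_simps)

lemma smult_pow_mat: assumes A: "(A :: 'a :: comm_ring_1 mat) \<in> carrier_mat n n"
  shows "(c \<cdot>\<^sub>m A) ^\<^sub>m k = c^k \<cdot>\<^sub>m (A ^\<^sub>m k)"
proof (induct k)
  case 0 show ?case by (rule eq_matI, auto)
next
  case (Suc k)
  have "(c \<cdot>\<^sub>m A) ^\<^sub>m Suc k = (c^k \<cdot>\<^sub>m (A ^\<^sub>m k)) * (c \<cdot>\<^sub>m A)" using Suc by simp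
  also have "\<dots> = c^Suc k \<cdot>\<^sub>m (A ^\<^sub>m Suc k)"
    by (rule eq_matI, insert A, auto simp: scalar_prod_def sum_distrib_left ac_simps)
  finally show ?case .
qed

lemma transpose_smult: "transpose_mat (c \<cdot>\<^sub>m A) = c \<cdot>\<^sub>m transpose_mat A"
  by (rule eq_matI, auto)

lemma eig_smult: assumes A: "(A :: 'a :: field mat) \<in> carrier_mat n n" and c: "c \<noteq> 0"
  and ev: "eigenvalue (c \<cdot>\<^sub>m A) \<mu>" shows "eigenvalue A (\<mu> / c)"
proof -
  from ev obtain v where v: "v \<in> carrier_vec n" "v \<noteq> 0\<^sub>v n" "(c \<cdot>\<^sub>m A) *\<^sub>v v = \<mu> \<cdot>\<^sub>v v"
    unfolding eigenvalue_def eigenvector_def using A by auto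
  have "A *\<^sub>v v = (1/c) \<cdot>\<^sub>v ((c \<cdot>\<^sub>m A) *\<^sub>v v)" 
    unfolding smult_mult_mat_vec[OF A v(1)] using c by (auto simp: smult_smult_assoc)
  also have "\<dots> = (\<mu> / c) \<cdot>\<^sub>v v" unfolding v(3) by (auto simp: smult_smult_assoc)
  finally show ?thesis unfolding eigenvalue_def eigenvector_def using A v by auto
qed

lemma pow_bound_real: assumes S: "(S::real mat) \<in> carrier_mat n n" and sym: "transpose_mat S = S"
  and n: "0 < n" and ev: "\<And>\<mu>. eigenvalue S \<mu> \<Longrightarrow> \<bar>\<mu>\<bar> \<le> d" and r: "d < r"
  shows "\<exists>c. \<forall>k i j. i < n \<longrightarrow> j < n \<longrightarrow> \<bar>(S ^\<^sub>m k) $$ (i,j)\<bar> \<le> c * r^k"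
proof -
  have d0: "0 \<le> d"
  proof -
    have "spectrum (map_mat complex_of_real S) \<noteq> {}" by (rule spectrum_non_empty[OF _ n], insert S, auto)
    then obtain z where "eigenvalue (map_mat complex_of_real S) z" unfolding spectrum_def by auto
    from sym_real_eig[OF S sym this] have "eigenvalue S (Re z)" by auto
    from ev[OF this] show ?thesis by auto
  qed
  hence r0: "r > 0" using r by auto
  define S' where "S' = (1/r) \<cdot>\<^sub>m S"
  have S': "S' \<in> carrier_mat n n" unfolding S'_def using S by auto
  have sym': "transpose_mat S' = S'" unfolding S'_def transpose_smult sym ..
  define Sc where "Sc = map_mat complex_of_real S'"
  have Sc: "Sc \<in> carrier_mat n n" unfolding Sc_def using S' by auto
  have "spectral_radius Sc < 1"
  proof -
    from spectral_radius_mem_max(1)[OF Sc n] obtain z where z: "z \<in> spectrum Sc" 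
      and rho: "spectral_radius Sc = norm z" by auto
    from z have "eigenvalue Sc z" unfolding spectrum_def by auto
    from sym_real_eig[OF S' sym' this[unfolded Sc_def]]
    have ez: "eigenvalue S' (Re z)" and zr: "z = complex_of_real (Re z)" by auto
    from eig_smult[OF S _ ez[unfolded S'_def]] r0 have "eigenvalue S (Re z / (1/r))" by auto
    from ev[OF this] have "\<bar>Re z * r\<bar> \<le> d" by simp
    hence "\<bar>Re z\<bar> * r \<le> d" using r0 by (simp add: abs_mult)
    hence "\<bar>Re z\<bar> * r < 1 * r" using r by linarith
    hence "\<bar>Re z\<bar> < 1" using r0 by (meson mult_less_cancel_right_pos)
    thus ?thesis unfolding rho by (subst zr, simp)
  qed
  from spectral_radius_jnf_norm_bound_less_1_upper_triangular[OF Sc this]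
  obtain c where c: "\<And>k. norm_bound (Sc ^\<^sub>m k) c" by auto
  show ?thesis
  proof (intro exI[of _ c] allI impI)
    fix k i j assume i: "i < n" and j: "j < n"
    have "Sc ^\<^sub>m k = map_mat complex_of_real (S' ^\<^sub>m k)"
      unfolding Sc_def by (rule of_real_hom.mat_hom_pow[OF S', symmetric])
    also have "S' ^\<^sub>m k = (1/r)^k \<cdot>\<^sub>m (S ^\<^sub>m k)" unfolding S'_def by (rule smult_pow_mat[OF S])
    finally have "norm_bound (map_mat complex_of_real ((1/r)^k \<cdot>\<^sub>m (S ^\<^sub>m k))) c" using c[of k] by simp
    hence "norm (complex_of_real ((1/r)^k * (S ^\<^sub>m k) $$ (i,j))) \<le> c"
      unfolding norm_bound_def using i j S by auto
    hence "\<bar>(S ^\<^sub>m k) $$ (i,j)\<bar> / r^k \<le> c" using r0 by (simp add: abs_mult power_divide norm_divide norm_power del: of_real_power)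
    thus "\<bar>(S ^\<^sub>m k) $$ (i,j)\<bar> \<le> c * r^k" using r0 by (simp add: field_simps)
  qed
qed

lemma pow_sq_mat: assumes S: "(S :: 'a :: semiring_1 mat) \<in> carrier_mat n n"
  shows "(S * S) ^\<^sub>m j = S ^\<^sub>m (2 * j)"
proof (induct j)
  case (Suc j)
  have "S ^\<^sub>m (2 * Suc j) = (S ^\<^sub>m (2 * j) * S) * S" by (simp)
  also have "\<dots> = S ^\<^sub>m (2 * j) * (S * S)" using S by (auto intro!: assoc_mult_mat)
  finally show ?case using Suc by simp
qed simp

lemma gelfand_iter: assumes S: "(S::real mat) \<in> carrier_mat n n" and sym: "transpose_mat S = S"
  and y: "y \<in> carrier_vec n"
  shows "((S *\<^sub>v y) \<bullet> (S *\<^sub>v y))^(2^k) \<le> (y \<bullet> y)^(2^k - 1) * ((S ^\<^sub>m (2^k) *\<^sub>v y) \<bullet> (S ^\<^sub>m (2^k) *\<^sub>v y))"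
  using S sym
proof (induct k arbitrary: S)
  case 0
  hence "S ^\<^sub>m (2^0) = S" by (auto intro!: eq_matI simp: scalar_prod_def)
  then show ?case by simp
next
  case (Suc k S)
  note S = Suc(2) note sym = Suc(3)
  let ?N = "\<lambda>v. (v::real vec) \<bullet> v"
  have SS: "S * S \<in> carrier_mat n n" using S by auto
  have symSS: "transpose_mat (S * S) = S * S" using S sym by (simp add: transpose_mult)
  have IH: "?N ((S * S) *\<^sub>v y)^(2^k) \<le> ?N y^(2^k - 1) * ?N ((S * S) ^\<^sub>m (2^k) *\<^sub>v y)"
    by (rule Suc(1)[OF SS symSS])
  have "?N (S *\<^sub>v y) = y \<bullet> (S *\<^sub>v (S *\<^sub>v y))"
    using transpose_vec_mult_scalar[OF S, of "S *\<^sub>v y" y] y S unfolding sym by auto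
  also have "S *\<^sub>v (S *\<^sub>v y) = (S * S) *\<^sub>v y" using S y by auto
  finally have "?N (S *\<^sub>v y) = y \<bullet> ((S * S) *\<^sub>v y)" .
  hence CS: "?N (S *\<^sub>v y)^2 \<le> ?N y * ?N ((S * S) *\<^sub>v y)"
    using cauchy_schwarz_vec[OF y, of "(S * S) *\<^sub>v y"] SS mult_mat_vec_carrier[OF SS y] by auto
  have "?N (S *\<^sub>v y)^(2^Suc k) = (?N (S *\<^sub>v y)^2)^(2^k)" by (simp add: power_mult[symmetric] mult.commute)
  also have "\<dots> \<le> (?N y * ?N ((S * S) *\<^sub>v y))^(2^k)"
    by (rule power_mono[OF CS], simp)
  also have "\<dots> = ?N y^(2^k) * ?N ((S * S) *\<^sub>v y)^(2^k)" by (simp add: power_mult_distrib)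
  also have "\<dots> \<le> ?N y^(2^k) * (?N y^(2^k - 1) * ?N ((S * S) ^\<^sub>m (2^k) *\<^sub>v y))"
    by (rule mult_left_mono[OF IH], simp add: sp_self_nonneg)
  also have "\<dots> = ?N y^(2^Suc k - 1) * ?N (S ^\<^sub>m (2^Suc k) *\<^sub>v y)"
  proof -
    have "?N y^(2^k) * ?N y^(2^k - 1) = ?N y^(2^Suc k - 1)"
    proof -
      have "(2::nat)^k + (2^k - 1) = 2^Suc k - 1" using one_le_power[of "2::nat" k] by simp
      thus ?thesis by (simp add: power_add[symmetric] del: power_Suc)
    qed
    moreover have "(S * S) ^\<^sub>m (2^k) = S ^\<^sub>m (2^Suc k)" using pow_sq_mat[OF S] by simp
    ultimately show ?thesis by (simp add: ac_simps)
  qed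
  finally show ?case .
qed

lemma comp_bound: assumes A: "(A::real mat) \<in> carrier_mat n n" and B: "\<And>i j. i < n \<Longrightarrow> j < n \<Longrightarrow> \<bar>A $$ (i,j)\<bar> \<le> B"
  and y: "y \<in> carrier_vec n" and i: "i < n"
  shows "\<bar>(A *\<^sub>v y) $ i\<bar> \<le> B * (\<Sum>j<n. \<bar>y $ j\<bar>)"
proof -
  have "\<bar>(A *\<^sub>v y) $ i\<bar> = \<bar>\<Sum>j<n. A $$ (i,j) * y $ j\<bar>"
    using A y i by (auto simp: scalar_prod_def lessThan_atLeast0)
  also have "\<dots> \<le> (\<Sum>j<n. \<bar>A $$ (i,j) * y $ j\<bar>)" by (rule sum_abs)
  also have "\<dots> \<le> (\<Sum>j<n. B * \<bar>y $ j\<bar>)"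
    by (rule sum_mono, auto simp: abs_mult intro!: mult_right_mono B i)
  finally show ?thesis by (simp add: sum_distrib_left)
qed

lemma sq_norm_bound: assumes w: "(w::real vec) \<in> carrier_vec n" and C: "\<And>i. i < n \<Longrightarrow> \<bar>w $ i\<bar> \<le> C"
  shows "w \<bullet> w \<le> real n * C^2"
proof -
  have "w \<bullet> w = (\<Sum>i<n. (w $ i)^2)" using w by (auto simp: scalar_prod_def lessThan_atLeast0 power2_eq_square)
  also have "\<dots> \<le> (\<Sum>i<n. C^2)"
  proof (rule sum_mono)
    fix i assume "i \<in> {..<n}" 
    hence "\<bar>w $ i\<bar> \<le> C" using C by auto
    thus "(w $ i)^2 \<le> C^2" by (metis abs_ge_zero order_trans power2_abs power_mono)
  qed
  finally show ?thesis by simp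
qed

lemma gelfand_r: assumes S: "(S::real mat) \<in> carrier_mat n n" and sym: "transpose_mat S = S"
  and n: "0 < n" and ev: "\<And>\<mu>. eigenvalue S \<mu> \<Longrightarrow> \<bar>\<mu>\<bar> \<le> d" and d: "0 \<le> d" and r: "d < r"
  and y: "y \<in> carrier_vec n"
  shows "(S *\<^sub>v y) \<bullet> (S *\<^sub>v y) \<le> r^2 * (y \<bullet> y)"
proof (rule ccontr)
  let ?N = "\<lambda>v. (v::real vec) \<bullet> v"
  assume contra: "\<not> ?thesis"
  have r0: "r > 0" using d r by auto
  from pow_bound_real[OF S sym n ev r] obtain c where
    c: "\<And>k i j. i < n \<Longrightarrow> j < n \<Longrightarrow> \<bar>(S ^\<^sub>m k) $$ (i,j)\<bar> \<le> c * r^k" by blast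
  define Y where "Y = (\<Sum>j<n. \<bar>y $ j\<bar>)"
  have Nk: "?N (S ^\<^sub>m k *\<^sub>v y) \<le> real n * (c * r^k * Y)^2" for k
  proof (rule sq_norm_bound[of _ n])
    show "S ^\<^sub>m k *\<^sub>v y \<in> carrier_vec n" using S y by (metis mult_mat_vec_carrier pow_carrier_mat)
    fix i assume i: "i < n"
    show "\<bar>(S ^\<^sub>m k *\<^sub>v y) $ i\<bar> \<le> c * r ^ k * Y" unfolding Y_def
      by (rule comp_bound[OF _ c y i], insert S, auto)
  qed
  have Ny0: "?N y > 0"
  proof -
    have "?N y \<noteq> 0"
    proof
      assume "?N y = 0"
      hence "y = 0\<^sub>v n" using sp_self_eq0[of y] y by auto
      moreover have "S *\<^sub>v 0\<^sub>v n = 0\<^sub>v n" using S by (intro eq_vecI, auto)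
      ultimately show False using contra S by auto
    qed
    thus ?thesis using sp_self_nonneg[of y] by linarith
  qed
  define t where "t = ?N (S *\<^sub>v y) / (r^2 * ?N y)"
  have rN: "r^2 * ?N y > 0" using r0 Ny0 by simp
  have t1: "t > 1" using contra rN unfolding t_def by (simp add: less_divide_eq)
  have NSy: "?N (S *\<^sub>v y) = t * r^2 * ?N y" unfolding t_def using Ny0 r0 by simp
  define B where "B = real n * c^2 * Y^2 / ?N y"
  have tB: "t^(2^k) \<le> B" for k
  proof -
    let ?M = "(2::nat)^k"
    have M1: "?M \<ge> 1" by simp
    have "(t * r^2 * ?N y)^?M \<le> ?N y^(?M - 1) * ?N (S ^\<^sub>m ?M *\<^sub>v y)"
      using gelfand_iter[OF S sym y, of k] unfolding NSy .
    also have "\<dots> \<le> ?N y^(?M - 1) * (real n * (c * r^?M * Y)^2)"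
      by (rule mult_left_mono[OF Nk], insert Ny0, simp)
    finally have ineq0: "(t * r^2 * ?N y)^?M \<le> ?N y^(?M - 1) * (real n * (c * r^?M * Y)^2)" .
    have e1: "(t * r^2 * ?N y)^?M = t^?M * (r^?M)^2 * (?N y^(?M - 1) * ?N y)"
    proof -
      have "(r^2)^?M = (r^?M)^2" by (simp add: power_mult[symmetric] mult.commute)
      moreover have "?N y^?M = ?N y^(?M - 1) * ?N y"
      proof -
        have "?N y^?M = ?N y^(?M - 1 + 1)" using M1 by simp
        also have "\<dots> = ?N y^(?M - 1) * ?N y" by (simp only: power_add power_one_right)
        finally show ?thesis .
      qed
      ultimately show ?thesis by (simp add: power_mult_distrib)
    qed
    have e2: "?N y^(?M - 1) * (real n * (c * r^?M * Y)^2) = ?N y^(?M - 1) * (real n * c^2 * Y^2) * (r^?M)^2"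
      by (simp add: power_mult_distrib)
    have ineq: "t^?M * (r^?M)^2 * (?N y^(?M - 1) * ?N y) \<le> ?N y^(?M - 1) * (real n * c^2 * Y^2) * (r^?M)^2"
      using ineq0 unfolding e1 e2 .
    have pos: "(r^?M)^2 * ?N y^(?M - 1) > 0" using r0 Ny0 by (intro mult_pos_pos zero_less_power, auto)
    have "t^?M * ?N y * ((r^?M)^2 * ?N y^(?M - 1)) \<le> (real n * c^2 * Y^2) * ((r^?M)^2 * ?N y^(?M - 1))"
      using ineq by (simp add: ac_simps)
    hence "t^?M * ?N y \<le> real n * c^2 * Y^2" using pos by (simp only: mult_le_cancel_right_pos)
    thus ?thesis unfolding B_def using Ny0 by (simp add: le_divide_eq)
  qed
  obtain k :: nat where k: "B / (t - 1) < real k" using reals_Archimedean2 by blast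
  have "B < real k * (t - 1)" using k t1 by (simp add: divide_less_eq)
  also have "\<dots> \<le> real (2^k) * (t - 1)"
  proof (rule mult_right_mono)
    have "k \<le> 2^k" using less_exp[of k] by simp
    thus "real k \<le> real (2^k)" by (simp only: of_nat_le_iff)
  qed (insert t1, simp)
  also have "\<dots> < 1 + real (2^k) * (t - 1)" by simp
  also have "\<dots> \<le> (1 + (t - 1))^(2^k)" using t1 by (intro Bernoulli_inequality) simp
  also have "\<dots> = t^(2^k)" by simp
  also have "\<dots> \<le> B" by (rule tB)
  finally show False by simp
qed

lemma gelfand: assumes S: "(S::real mat) \<in> carrier_mat n n" and sym: "transpose_mat S = S"
  and n: "0 < n" and ev: "\<And>\<mu>. eigenvalue S \<mu> \<Longrightarrow> \<bar>\<mu>\<bar> \<le> d" and d: "0 \<le> d"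
  and y: "y \<in> carrier_vec n"
  shows "(S *\<^sub>v y) \<bullet> (S *\<^sub>v y) \<le> d^2 * (y \<bullet> y)"
proof (rule ccontr)
  let ?N = "\<lambda>v. (v::real vec) \<bullet> v"
  assume contra: "\<not> ?thesis"
  have Ny0: "?N y > 0"
  proof -
    have "?N y \<noteq> 0"
    proof
      assume "?N y = 0"
      hence "?N (S *\<^sub>v y) \<le> (d+1)^2 * ?N y" by (intro gelfand_r[OF S sym n ev d _ y], auto)
      thus False using contra \<open>?N y = 0\<close> by auto
    qed
    thus ?thesis using sp_self_nonneg[of y] by linarith
  qed
  define q where "q = ?N (S *\<^sub>v y) / ?N y"
  have q: "d^2 < q" using contra Ny0 unfolding q_def by (simp add: less_divide_eq)
  have dq: "d < sqrt q" using q d real_less_rsqrt by blast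
  define r where "r = (d + sqrt q) / 2"
  have r: "d < r" "r < sqrt q" using dq unfolding r_def by auto
  have "r^2 < (sqrt q)^2" using r d by (intro power_strict_mono, auto)
  moreover have "(sqrt q)^2 = q" using q by (simp add: order.strict_trans1[OF zero_le_power2 q] less_imp_le)
  ultimately have "r^2 < q" by simp
  hence "r^2 * ?N y < ?N (S *\<^sub>v y)" using Ny0 unfolding q_def by (simp add: less_divide_eq)
  with gelfand_r[OF S sym n ev d r(1) y] show False by simp
qed

lemma shift_mult: assumes P: "(P :: 'a :: comm_ring_1 mat) \<in> carrier_mat n n" and v: "v \<in> carrier_vec n"
  shows "(P - c \<cdot>\<^sub>m 1\<^sub>m n) *\<^sub>v v = P *\<^sub>v v - c \<cdot>\<^sub>v v"
  "(c \<cdot>\<^sub>m 1\<^sub>m n + P) *\<^sub>v v = c \<cdot>\<^sub>v v + P *\<^sub>v v"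
proof -
  have "(c \<cdot>\<^sub>m 1\<^sub>m n) *\<^sub>v v = c \<cdot>\<^sub>v v" using smult_mult_mat_vec[of "1\<^sub>m n" n v c] v by simp
  moreover have "(P - c \<cdot>\<^sub>m 1\<^sub>m n) *\<^sub>v v = P *\<^sub>v v - (c \<cdot>\<^sub>m 1\<^sub>m n) *\<^sub>v v"
    by (rule minus_mult_distrib_mat_vec[OF P _ v], simp)
  moreover have "(c \<cdot>\<^sub>m 1\<^sub>m n + P) *\<^sub>v v = (c \<cdot>\<^sub>m 1\<^sub>m n) *\<^sub>v v + P *\<^sub>v v"
    by (rule add_mult_distrib_mat_vec[OF _ P v], simp)
  ultimately show "(P - c \<cdot>\<^sub>m 1\<^sub>m n) *\<^sub>v v = P *\<^sub>v v - c \<cdot>\<^sub>v v"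
    "(c \<cdot>\<^sub>m 1\<^sub>m n + P) *\<^sub>v v = c \<cdot>\<^sub>v v + P *\<^sub>v v" by auto
qed

lemma eig_shift: assumes P: "(P :: 'a :: comm_ring_1 mat) \<in> carrier_mat n n"
  and ev: "eigenvalue (P - c \<cdot>\<^sub>m 1\<^sub>m n) \<mu>" shows "eigenvalue P (\<mu> + c)"
proof -
  from ev obtain v where v: "v \<in> carrier_vec n" "v \<noteq> 0\<^sub>v n" "(P - c \<cdot>\<^sub>m 1\<^sub>m n) *\<^sub>v v = \<mu> \<cdot>\<^sub>v v"
    unfolding eigenvalue_def eigenvector_def using P by auto
  have eq: "P *\<^sub>v v - c \<cdot>\<^sub>v v = \<mu> \<cdot>\<^sub>v v" using v(3) unfolding shift_mult[OF P v(1)] .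
  have "P *\<^sub>v v = (\<mu> + c) \<cdot>\<^sub>v v"
  proof (rule eq_vecI)
    fix i assume "i < dim_vec ((\<mu> + c) \<cdot>\<^sub>v v)"
    hence i: "i < n" using v(1) by simp
    have "(P *\<^sub>v v - c \<cdot>\<^sub>v v) $ i = (\<mu> \<cdot>\<^sub>v v) $ i" using eq by simp
    hence "(P *\<^sub>v v) $ i - c * v $ i = \<mu> * v $ i" using i P v(1) by simp
    thus "(P *\<^sub>v v) $ i = ((\<mu> + c) \<cdot>\<^sub>v v) $ i" using i v(1) by (simp add: algebra_simps)
  qed (insert P v(1), simp)
  thus ?thesis unfolding eigenvalue_def eigenvector_def using P v by auto
qed

lemma sp_plus: assumes "(a::real vec) \<in> carrier_vec n" "b \<in> carrier_vec n"
  shows "(a + b) \<bullet> (a + b) = a \<bullet> a + 2 * (a \<bullet> b) + b \<bullet> b"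
  using assms by (simp add: add_scalar_prod_distrib scalar_prod_add_distrib comm_scalar_prod[of b n a])

lemma sp_minus: assumes "(a::real vec) \<in> carrier_vec n" "b \<in> carrier_vec n"
  shows "(a - b) \<bullet> (a - b) = a \<bullet> a - 2 * (a \<bullet> b) + b \<bullet> b"
  using assms by (simp add: minus_scalar_prod_distrib scalar_prod_minus_distrib comm_scalar_prod[of b n a])

lemma quad_ineq: assumes P: "(P::real mat) \<in> carrier_mat n n" and sym: "transpose_mat P = P"
  and n: "0 < n" and \<alpha>: "0 < \<alpha>" and g1: "g < 1" and g2: "1/2 \<le> g"
  and ev: "\<And>\<mu>. eigenvalue P \<mu> \<Longrightarrow> \<alpha>^2 + \<mu>^2 \<le> g * (\<alpha> + \<mu>)^2"
  and y: "y \<in> carrier_vec n"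
  shows "\<alpha>^2 * (y \<bullet> y) + (P *\<^sub>v y) \<bullet> (P *\<^sub>v y) \<le> g * (((\<alpha> \<cdot>\<^sub>m 1\<^sub>m n + P) *\<^sub>v y) \<bullet> ((\<alpha> \<cdot>\<^sub>m 1\<^sub>m n + P) *\<^sub>v y))"
proof -
  define c where "c = \<alpha> * g / (1 - g)"
  have cg: "c * (1 - g) = \<alpha> * g" unfolding c_def using g1 by simp
  have ca: "\<alpha> \<le> c" unfolding c_def using g1 g2 \<alpha> by (simp add: field_simps)
  define dd where "dd = c^2 - \<alpha>^2"
  have dd: "0 \<le> dd" unfolding dd_def using ca \<alpha> by (simp add: power_mono)
  define S where "S = P - c \<cdot>\<^sub>m 1\<^sub>m n"
  have S: "S \<in> carrier_mat n n" unfolding S_def using P by (intro minus_carrier_mat, auto)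
  have symS: "transpose_mat S = S"
  proof (intro eq_matI)
    fix i j assume "i < dim_row S" "j < dim_col S"
    hence ij: "i < n" "j < n" using S by auto
    have "P $$ (j,i) = P $$ (i,j)" using arg_cong[OF sym, of "\<lambda>A. A $$ (i,j)"] ij P by simp
    thus "transpose_mat S $$ (i, j) = S $$ (i, j)" unfolding S_def using ij P by simp
  qed (insert S, auto)
  have evS: "\<bar>\<mu>\<bar> \<le> sqrt dd" if e: "eigenvalue S \<mu>" for \<mu>
  proof -
    from ev[OF eig_shift[OF P e[unfolded S_def]]]
    have "\<alpha>^2 + (\<mu> + c)^2 \<le> g * (\<alpha> + (\<mu> + c))^2" .
    hence "(1 - g) * ((\<mu> + c)^2 + \<alpha>^2) - 2 * (\<alpha> * g) * (\<mu> + c) \<le> 0" 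
      by (simp add: power2_eq_square algebra_simps)
    hence "(1 - g) * ((\<mu> + c)^2 + \<alpha>^2) - 2 * (c * (1 - g)) * (\<mu> + c) \<le> 0" unfolding cg .
    hence "(1 - g) * (\<mu>^2 - dd) \<le> 0" unfolding dd_def by (simp add: power2_eq_square algebra_simps)
    hence "\<mu>^2 \<le> dd" using g1 by (simp add: mult_le_0_iff)
    thus ?thesis by (simp add: real_le_rsqrt)
  qed
  have G: "(S *\<^sub>v y) \<bullet> (S *\<^sub>v y) \<le> (sqrt dd)^2 * (y \<bullet> y)"
    by (rule gelfand[OF S symS n evS real_sqrt_ge_zero[OF dd] y])
  have Py: "P *\<^sub>v y \<in> carrier_vec n" using P y by simp
  have "S *\<^sub>v y = P *\<^sub>v y - c \<cdot>\<^sub>v y" unfolding S_def by (rule shift_mult[OF P y])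
  hence "(S *\<^sub>v y) \<bullet> (S *\<^sub>v y) = (P *\<^sub>v y) \<bullet> (P *\<^sub>v y) - 2 * c * ((P *\<^sub>v y) \<bullet> y) + c^2 * (y \<bullet> y)"
    using sp_minus[OF Py, of "c \<cdot>\<^sub>v y"] y Py by (simp add: power2_eq_square)
  with G dd have G2: "(P *\<^sub>v y) \<bullet> (P *\<^sub>v y) - 2 * c * ((P *\<^sub>v y) \<bullet> y) + \<alpha>^2 * (y \<bullet> y) \<le> 0"
    unfolding dd_def by (simp add: algebra_simps)
  have "(\<alpha> \<cdot>\<^sub>m 1\<^sub>m n + P) *\<^sub>v y = \<alpha> \<cdot>\<^sub>v y + P *\<^sub>v y" by (rule shift_mult[OF P y])
  hence R: "((\<alpha> \<cdot>\<^sub>m 1\<^sub>m n + P) *\<^sub>v y) \<bullet> ((\<alpha> \<cdot>\<^sub>m 1\<^sub>m n + P) *\<^sub>v y)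
     = \<alpha>^2 * (y \<bullet> y) + 2 * \<alpha> * ((P *\<^sub>v y) \<bullet> y) + (P *\<^sub>v y) \<bullet> (P *\<^sub>v y)"
    using sp_plus[OF _ Py, of "\<alpha> \<cdot>\<^sub>v y"] y Py comm_scalar_prod[OF y Py] by (simp add: power2_eq_square)
  have "(1 - g) * ((P *\<^sub>v y) \<bullet> (P *\<^sub>v y) - 2 * c * ((P *\<^sub>v y) \<bullet> y) + \<alpha>^2 * (y \<bullet> y)) \<le> 0"
    using G2 g1 by (simp add: mult_le_0_iff)
  hence "(1 - g) * ((P *\<^sub>v y) \<bullet> (P *\<^sub>v y) + \<alpha>^2 * (y \<bullet> y)) - 2 * (c * (1 - g)) * ((P *\<^sub>v y) \<bullet> y) \<le> 0"
    by (simp add: algebra_simps)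
  hence "(1 - g) * ((P *\<^sub>v y) \<bullet> (P *\<^sub>v y) + \<alpha>^2 * (y \<bullet> y)) - 2 * (\<alpha> * g) * ((P *\<^sub>v y) \<bullet> y) \<le> 0"
    unfolding cg .
  thus ?thesis unfolding R by (simp add: algebra_simps)
qed

definition blk :: "'a vec \<Rightarrow> 'a vec \<Rightarrow> 'a vec \<Rightarrow> 'a vec \<Rightarrow> 'a vec" where
  "blk y1 y2 y3 y4 = (y1 @\<^sub>v y2) @\<^sub>v (y3 @\<^sub>v y4)"

definition G0 :: "real \<Rightarrow> real \<Rightarrow> nat \<Rightarrow> real mat" where
  "G0 a s m = (let I = (1\<^sub>m m :: real mat); Z = (0\<^sub>m m m :: real mat) in
       four_block_mat
         (four_block_mat Z (a \<cdot>\<^sub>m I) ((- a) \<cdot>\<^sub>m I) Z)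
         (four_block_mat (s \<cdot>\<^sub>m I) Z Z (s \<cdot>\<^sub>m I))
         (four_block_mat ((- s) \<cdot>\<^sub>m I) Z Z ((- s) \<cdot>\<^sub>m I))
         (four_block_mat Z ((- a) \<cdot>\<^sub>m I) (a \<cdot>\<^sub>m I) Z))"

definition bd :: "real mat \<Rightarrow> real mat" where
  "bd P = (let n = dim_row P; Q = four_block_mat P (0\<^sub>m n n) (0\<^sub>m n n) P in
     four_block_mat Q (0\<^sub>m (n+n) (n+n)) (0\<^sub>m (n+n) (n+n)) Q)"

lemma G_mat_G0: "G_mat m \<nu> \<omega> = (1 / sqrt (\<nu> * (1 + \<nu> * \<omega>^2))) \<cdot>\<^sub>m G0 (\<omega> * \<nu>) (sqrt \<nu>) m"
  unfolding G_mat_def G0_def Let_def ..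

lemma G0_carrier[simp]: "G0 a s m \<in> carrier_mat (4*m) (4*m)"
proof -
  have e: "(m+m)+(m+m) = 4*m" by simp
  have "G0 a s m \<in> carrier_mat ((m+m)+(m+m)) ((m+m)+(m+m))"
    unfolding G0_def Let_def by (intro four_block_carrier_mat, auto)
  thus ?thesis unfolding e .
qed

lemma bd_carrier[simp]: assumes P: "P \<in> carrier_mat m m" shows "bd P \<in> carrier_mat (4*m) (4*m)"
proof -
  have e: "(m+m)+(m+m) = 4*m" by simp
  have d: "dim_row P = m" using P by auto
  have "bd P \<in> carrier_mat ((m+m)+(m+m)) ((m+m)+(m+m))"
    unfolding bd_def Let_def d by (intro four_block_carrier_mat, auto simp: P)
  thus ?thesis unfolding e .
qed
lemma blk_carrier[simp]: assumes "y1 \<in> carrier_vec m" "y2 \<in> carrier_vec m" "y3 \<in> carrier_vec m" "y4 \<in> carrier_vec m"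
  shows "blk y1 y2 y3 y4 \<in> carrier_vec (4*m)"
proof -
  have e: "(m+m)+(m+m) = 4*m" by simp
  have "blk y1 y2 y3 y4 \<in> carrier_vec ((m+m)+(m+m))" unfolding blk_def
    by (intro append_carrier_vec assms)
  thus ?thesis unfolding e .
qed

lemma blk_split: assumes "y \<in> carrier_vec (4*m)"
  shows "\<exists>y1 y2 y3 y4. y1 \<in> carrier_vec m \<and> y2 \<in> carrier_vec m \<and> y3 \<in> carrier_vec m \<and> y4 \<in> carrier_vec m
     \<and> y = blk y1 y2 y3 y4"
proof -
  have e: "(m+m)+(m+m) = 4*m" by simp
  have y: "y \<in> carrier_vec ((m+m)+(m+m))" using assms unfolding e .
  define u where "u = vec_first y (m+m)"
  define w where "w = vec_last y (m+m)"
  have yuw: "y = u @\<^sub>v w" unfolding u_def w_def using vec_first_last_append[OF y] by simp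
  have u: "u \<in> carrier_vec (m+m)" and w: "w \<in> carrier_vec (m+m)" unfolding u_def w_def by auto
  have "u = vec_first u m @\<^sub>v vec_last u m" using vec_first_last_append[OF u] by simp
  moreover have "w = vec_first w m @\<^sub>v vec_last w m" using vec_first_last_append[OF w] by simp
  ultimately have "y = blk (vec_first u m) (vec_last u m) (vec_first w m) (vec_last w m)"
    unfolding blk_def using yuw by simp
  moreover have "vec_first u m \<in> carrier_vec m" "vec_last u m \<in> carrier_vec m"
     "vec_first w m \<in> carrier_vec m" "vec_last w m \<in> carrier_vec m" by auto
  ultimately show ?thesis by blast
qed

lemma blk_eq: assumes "y1 \<in> carrier_vec m" "y2 \<in> carrier_vec m" "y3 \<in> carrier_vec m" "y4 \<in> carrier_vec m"
  "z1 \<in> carrier_vec m" "z2 \<in> carrier_vec m" "z3 \<in> carrier_vec m" "z4 \<in> carrier_vec m"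
  shows "blk y1 y2 y3 y4 = blk z1 z2 z3 z4 \<longleftrightarrow> y1 = z1 \<and> y2 = z2 \<and> y3 = z3 \<and> y4 = z4"
proof -
  have a: "y1 @\<^sub>v y2 \<in> carrier_vec (m+m)" "z1 @\<^sub>v z2 \<in> carrier_vec (m+m)" using assms by (auto intro: append_carrier_vec)
  show ?thesis unfolding blk_def append_vec_eq[OF a] append_vec_eq[OF assms(1,5)] append_vec_eq[OF assms(3,7)] by simp
qed
lemma blk_sp: assumes "y1 \<in> carrier_vec m" "y2 \<in> carrier_vec m" "y3 \<in> carrier_vec m" "y4 \<in> carrier_vec m"
  "z1 \<in> carrier_vec m" "z2 \<in> carrier_vec m" "z3 \<in> carrier_vec m" "z4 \<in> carrier_vec m"
  shows "blk y1 y2 y3 y4 \<bullet> blk z1 z2 z3 z4 = y1 \<bullet> z1 + y2 \<bullet> z2 + y3 \<bullet> z3 + y4 \<bullet> z4"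
proof -
  have a: "y1 @\<^sub>v y2 \<in> carrier_vec (m+m)" "y3 @\<^sub>v y4 \<in> carrier_vec (m+m)"
    "z1 @\<^sub>v z2 \<in> carrier_vec (m+m)" "z3 @\<^sub>v z4 \<in> carrier_vec (m+m)" using assms by auto
  show ?thesis unfolding blk_def scalar_prod_append[OF a(1,2) a(3,4)]
      scalar_prod_append[OF assms(1,2) assms(5,6)] scalar_prod_append[OF assms(3,4) assms(7,8)] by (simp only: add.assoc)
qed

lemma blk_add: assumes "y1 \<in> carrier_vec m" "y2 \<in> carrier_vec m" "y3 \<in> carrier_vec m" "y4 \<in> carrier_vec m"
  "z1 \<in> carrier_vec m" "z2 \<in> carrier_vec m" "z3 \<in> carrier_vec m" "z4 \<in> carrier_vec m"
  shows "blk y1 y2 y3 y4 + blk z1 z2 z3 z4 = blk (y1 + z1) (y2 + z2) (y3 + z3) (y4 + z4)"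
proof -
  have a: "y1 @\<^sub>v y2 \<in> carrier_vec (m+m)" "y3 @\<^sub>v y4 \<in> carrier_vec (m+m)"
    "z1 @\<^sub>v z2 \<in> carrier_vec (m+m)" "z3 @\<^sub>v z4 \<in> carrier_vec (m+m)" using assms by auto
  show ?thesis unfolding blk_def append_vec_add[OF a(1,3) a(2,4)]
      append_vec_add[OF assms(1,5) assms(2,6)] append_vec_add[OF assms(3,7) assms(4,8)] ..
qed

lemma blk_smult: "c \<cdot>\<^sub>v blk y1 y2 y3 y4 = blk (c \<cdot>\<^sub>v y1) (c \<cdot>\<^sub>v y2) (c \<cdot>\<^sub>v y3) (c \<cdot>\<^sub>v y4)"
proof -
  have sa: "c \<cdot>\<^sub>v (v @\<^sub>v w) = (c \<cdot>\<^sub>v v) @\<^sub>v (c \<cdot>\<^sub>v w)" for v w :: "'a vec"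
    by (rule eq_vecI, auto)
  show ?thesis unfolding blk_def sa ..
qed

lemma fbmv: assumes "A \<in> carrier_mat k k" "B \<in> carrier_mat k k" "C \<in> carrier_mat k k" "D \<in> carrier_mat k k"
  "a \<in> carrier_vec k" "d \<in> carrier_vec k"
  shows "four_block_mat A B C D *\<^sub>v (a @\<^sub>v d) = (A *\<^sub>v a + B *\<^sub>v d) @\<^sub>v (C *\<^sub>v a + D *\<^sub>v d)"
  by (rule four_block_mat_mult_vec[OF assms])

lemma zero_mult_vec: "v \<in> carrier_vec n \<Longrightarrow> 0\<^sub>m k n *\<^sub>v (v :: 'a :: semiring_0 vec) = 0\<^sub>v k"
  by (intro eq_vecI, auto)

lemma sI_mult_vec: "v \<in> carrier_vec n \<Longrightarrow> (c \<cdot>\<^sub>m 1\<^sub>m n) *\<^sub>v (v :: 'a :: comm_ring_1 vec) = c \<cdot>\<^sub>v v"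
  using smult_mult_mat_vec[of "1\<^sub>m n" n v c] by simp
lemma G0_mult: assumes y: "y1 \<in> carrier_vec m" "y2 \<in> carrier_vec m" "y3 \<in> carrier_vec m" "y4 \<in> carrier_vec m"
  shows "G0 a s m *\<^sub>v blk y1 y2 y3 y4 = blk (a \<cdot>\<^sub>v y2 + s \<cdot>\<^sub>v y3) ((-a) \<cdot>\<^sub>v y1 + s \<cdot>\<^sub>v y4)
      ((-s) \<cdot>\<^sub>v y1 + (-a) \<cdot>\<^sub>v y4) ((-s) \<cdot>\<^sub>v y2 + a \<cdot>\<^sub>v y3)"
proof -
  let ?I = "1\<^sub>m m :: real mat" let ?Z = "0\<^sub>m m m :: real mat"
  have cI: "\<And>c. c \<cdot>\<^sub>m ?I \<in> carrier_mat m m" "?Z \<in> carrier_mat m m" by auto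
  have cB: "four_block_mat ?Z (a \<cdot>\<^sub>m ?I) ((- a) \<cdot>\<^sub>m ?I) ?Z \<in> carrier_mat (m+m) (m+m)"
    "four_block_mat (s \<cdot>\<^sub>m ?I) ?Z ?Z (s \<cdot>\<^sub>m ?I) \<in> carrier_mat (m+m) (m+m)"
    "four_block_mat ((- s) \<cdot>\<^sub>m ?I) ?Z ?Z ((- s) \<cdot>\<^sub>m ?I) \<in> carrier_mat (m+m) (m+m)"
    "four_block_mat ?Z ((- a) \<cdot>\<^sub>m ?I) (a \<cdot>\<^sub>m ?I) ?Z \<in> carrier_mat (m+m) (m+m)"
    by (intro four_block_carrier_mat cI)+
  have c2: "y1 @\<^sub>v y2 \<in> carrier_vec (m+m)" "y3 @\<^sub>v y4 \<in> carrier_vec (m+m)" using y by auto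
  note inner = fbmv[OF cI(2) cI(1) cI(1) cI(2)] fbmv[OF cI(1) cI(2) cI(2) cI(1)]
  have "G0 a s m *\<^sub>v blk y1 y2 y3 y4 = 
    (four_block_mat ?Z (a \<cdot>\<^sub>m ?I) ((- a) \<cdot>\<^sub>m ?I) ?Z *\<^sub>v (y1 @\<^sub>v y2) + four_block_mat (s \<cdot>\<^sub>m ?I) ?Z ?Z (s \<cdot>\<^sub>m ?I) *\<^sub>v (y3 @\<^sub>v y4))
    @\<^sub>v (four_block_mat ((- s) \<cdot>\<^sub>m ?I) ?Z ?Z ((- s) \<cdot>\<^sub>m ?I) *\<^sub>v (y1 @\<^sub>v y2) + four_block_mat ?Z ((- a) \<cdot>\<^sub>m ?I) (a \<cdot>\<^sub>m ?I) ?Z *\<^sub>v (y3 @\<^sub>v y4))"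
    unfolding G0_def Let_def blk_def by (rule fbmv[OF cB c2])
  also have "\<dots> = ((a \<cdot>\<^sub>v y2 @\<^sub>v (-a) \<cdot>\<^sub>v y1) + (s \<cdot>\<^sub>v y3 @\<^sub>v s \<cdot>\<^sub>v y4)) @\<^sub>v 
     (((-s) \<cdot>\<^sub>v y1 @\<^sub>v (-s) \<cdot>\<^sub>v y2) + ((-a) \<cdot>\<^sub>v y4 @\<^sub>v a \<cdot>\<^sub>v y3))"
    unfolding inner[OF y(1,2)] inner[OF y(3,4)] using y by (simp add: zero_mult_vec sI_mult_vec)
  also have "\<dots> = blk (a \<cdot>\<^sub>v y2 + s \<cdot>\<^sub>v y3) ((-a) \<cdot>\<^sub>v y1 + s \<cdot>\<^sub>v y4)
      ((-s) \<cdot>\<^sub>v y1 + (-a) \<cdot>\<^sub>v y4) ((-s) \<cdot>\<^sub>v y2 + a \<cdot>\<^sub>v y3)"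
    unfolding blk_def using y by (subst append_vec_add[of _ m], auto)+
  finally show ?thesis .
qed

lemma bd_mult: assumes P: "P \<in> carrier_mat m m" and y: "y1 \<in> carrier_vec m" "y2 \<in> carrier_vec m" "y3 \<in> carrier_vec m" "y4 \<in> carrier_vec m"
  shows "bd P *\<^sub>v blk y1 y2 y3 y4 = blk (P *\<^sub>v y1) (P *\<^sub>v y2) (P *\<^sub>v y3) (P *\<^sub>v y4)"
proof -
  let ?Z = "0\<^sub>m m m :: real mat" let ?ZZ = "0\<^sub>m (m+m) (m+m) :: real mat"
  let ?Q = "four_block_mat P ?Z ?Z P"
  have d: "dim_row P = m" using P by auto
  have cZ: "?Z \<in> carrier_mat m m" "?ZZ \<in> carrier_mat (m+m) (m+m)" by auto
  have cQ: "?Q \<in> carrier_mat (m+m) (m+m)" by (intro four_block_carrier_mat P)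
  have c2: "y1 @\<^sub>v y2 \<in> carrier_vec (m+m)" "y3 @\<^sub>v y4 \<in> carrier_vec (m+m)" using y by auto
  note inner = fbmv[OF P cZ(1) cZ(1) P]
  have "bd P *\<^sub>v blk y1 y2 y3 y4 = (?Q *\<^sub>v (y1 @\<^sub>v y2) + ?ZZ *\<^sub>v (y3 @\<^sub>v y4)) @\<^sub>v (?ZZ *\<^sub>v (y1 @\<^sub>v y2) + ?Q *\<^sub>v (y3 @\<^sub>v y4))"
    unfolding bd_def Let_def blk_def d by (rule fbmv[OF cQ cZ(2) cZ(2) cQ c2])
  also have "\<dots> = blk (P *\<^sub>v y1) (P *\<^sub>v y2) (P *\<^sub>v y3) (P *\<^sub>v y4)"
    unfolding inner[OF y(1,2)] inner[OF y(3,4)] blk_def using y P c2 by (simp add: zero_mult_vec)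
  finally show ?thesis .
qed

lemma lin2_sq: assumes "(u::real vec) \<in> carrier_vec m" "v \<in> carrier_vec m"
  shows "(p \<cdot>\<^sub>v u + q \<cdot>\<^sub>v v) \<bullet> (p \<cdot>\<^sub>v u + q \<cdot>\<^sub>v v) = p^2 * (u \<bullet> u) + 2 * p * q * (u \<bullet> v) + q^2 * (v \<bullet> v)"
proof -
  have "(p \<cdot>\<^sub>v u + q \<cdot>\<^sub>v v) \<bullet> (p \<cdot>\<^sub>v u + q \<cdot>\<^sub>v v) = (p \<cdot>\<^sub>v u) \<bullet> (p \<cdot>\<^sub>v u) + 2 * ((p \<cdot>\<^sub>v u) \<bullet> (q \<cdot>\<^sub>v v)) + (q \<cdot>\<^sub>v v) \<bullet> (q \<cdot>\<^sub>v v)"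
    by (rule sp_plus, insert assms, auto)
  thus ?thesis using assms by (simp add: power2_eq_square)
qed

lemma lin2_sp: assumes "(x::real vec) \<in> carrier_vec m" "(u::real vec) \<in> carrier_vec m" "v \<in> carrier_vec m"
  shows "x \<bullet> (p \<cdot>\<^sub>v u + q \<cdot>\<^sub>v v) = p * (x \<bullet> u) + q * (x \<bullet> v)"
  using assms by (simp add: scalar_prod_add_distrib[of x m])

lemma G0_norm: assumes w: "w \<in> carrier_vec (4*m)"
  shows "(G0 a s m *\<^sub>v w) \<bullet> (G0 a s m *\<^sub>v w) = (a^2 + s^2) * (w \<bullet> w)"
proof -
  from blk_split[OF w] obtain w1 w2 w3 w4 where c: "w1 \<in> carrier_vec m" "w2 \<in> carrier_vec m"
    "w3 \<in> carrier_vec m" "w4 \<in> carrier_vec m" and wd: "w = blk w1 w2 w3 w4" by blast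
  note cc = comm_scalar_prod[OF c(1) c(4)] comm_scalar_prod[OF c(2) c(3)]
  have e: "(G0 a s m *\<^sub>v w) \<bullet> (G0 a s m *\<^sub>v w) = 
     (a \<cdot>\<^sub>v w2 + s \<cdot>\<^sub>v w3) \<bullet> (a \<cdot>\<^sub>v w2 + s \<cdot>\<^sub>v w3) + ((-a) \<cdot>\<^sub>v w1 + s \<cdot>\<^sub>v w4) \<bullet> ((-a) \<cdot>\<^sub>v w1 + s \<cdot>\<^sub>v w4)
     + ((-s) \<cdot>\<^sub>v w1 + (-a) \<cdot>\<^sub>v w4) \<bullet> ((-s) \<cdot>\<^sub>v w1 + (-a) \<cdot>\<^sub>v w4) + ((-s) \<cdot>\<^sub>v w2 + a \<cdot>\<^sub>v w3) \<bullet> ((-s) \<cdot>\<^sub>v w2 + a \<cdot>\<^sub>v w3)"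
    unfolding wd G0_mult[OF c] using c by (subst blk_sp[where m=m], auto)
  show ?thesis unfolding e unfolding wd blk_sp[OF c c] lin2_sq[OF c(2,3)] lin2_sq[OF c(1,4)] lin2_sq[OF c(2,3)] 
    by (simp add: power2_eq_square algebra_simps)
qed

lemma G0_bd_orth: assumes P: "P \<in> carrier_mat m m" and sym: "transpose_mat P = P" and y: "y \<in> carrier_vec (4*m)"
  shows "y \<bullet> (G0 a s m *\<^sub>v (bd P *\<^sub>v y)) = 0"
proof -
  from blk_split[OF y] obtain y1 y2 y3 y4 where c: "y1 \<in> carrier_vec m" "y2 \<in> carrier_vec m"
    "y3 \<in> carrier_vec m" "y4 \<in> carrier_vec m" and yd: "y = blk y1 y2 y3 y4" by blast
  have Pc: "P *\<^sub>v y1 \<in> carrier_vec m" "P *\<^sub>v y2 \<in> carrier_vec m" "P *\<^sub>v y3 \<in> carrier_vec m" "P *\<^sub>v y4 \<in> carrier_vec m"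
    using P c by auto
  have sy: "u \<bullet> (P *\<^sub>v v) = v \<bullet> (P *\<^sub>v u)" if "u \<in> carrier_vec m" "v \<in> carrier_vec m" for u v
  proof -
    have "(transpose_mat P *\<^sub>v u) \<bullet> v = u \<bullet> (P *\<^sub>v v)" by (rule transpose_vec_mult_scalar[OF P that(2,1)])
    hence "u \<bullet> (P *\<^sub>v v) = (P *\<^sub>v u) \<bullet> v" unfolding sym by simp
    also have "\<dots> = v \<bullet> (P *\<^sub>v u)" by (rule comm_scalar_prod[of _ m], insert P that, auto)
    finally show ?thesis .
  qed
  have e: "y \<bullet> (G0 a s m *\<^sub>v (bd P *\<^sub>v y)) = 
     y1 \<bullet> (a \<cdot>\<^sub>v (P *\<^sub>v y2) + s \<cdot>\<^sub>v (P *\<^sub>v y3)) + y2 \<bullet> ((-a) \<cdot>\<^sub>v (P *\<^sub>v y1) + s \<cdot>\<^sub>v (P *\<^sub>v y4))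
     + y3 \<bullet> ((-s) \<cdot>\<^sub>v (P *\<^sub>v y1) + (-a) \<cdot>\<^sub>v (P *\<^sub>v y4)) + y4 \<bullet> ((-s) \<cdot>\<^sub>v (P *\<^sub>v y2) + a \<cdot>\<^sub>v (P *\<^sub>v y3))"
    unfolding yd bd_mult[OF P c] G0_mult[OF Pc] using c Pc by (subst blk_sp[where m=m], auto)
  show ?thesis unfolding e lin2_sp[OF c(1) Pc(2,3)] lin2_sp[OF c(2) Pc(1,4)] lin2_sp[OF c(3) Pc(1,4)] lin2_sp[OF c(4) Pc(2,3)]
    sy[OF c(2) c(1)] sy[OF c(3) c(1)] sy[OF c(4) c(2)] sy[OF c(4) c(3)]
    by (simp add: algebra_simps)
qed

lemma bd_sym: assumes P: "P \<in> carrier_mat m m" and sym: "transpose_mat P = P"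
  shows "transpose_mat (bd P) = bd P"
proof -
  let ?Z = "0\<^sub>m m m :: real mat" let ?ZZ = "0\<^sub>m (m+m) (m+m) :: real mat"
  let ?Q = "four_block_mat P ?Z ?Z P"
  have d: "dim_row P = m" using P by auto
  have cZ: "?Z \<in> carrier_mat m m" "?ZZ \<in> carrier_mat (m+m) (m+m)" by auto
  have cQ: "?Q \<in> carrier_mat (m+m) (m+m)" by (intro four_block_carrier_mat P)
  have tQ: "transpose_mat ?Q = ?Q" unfolding transpose_four_block_mat[OF P cZ(1) cZ(1) P] sym by simp
  show ?thesis unfolding bd_def Let_def d transpose_four_block_mat[OF cQ cZ(2) cZ(2) cQ] tQ by simp
qed

lemma bd_eig: assumes P: "P \<in> carrier_mat m m" and ev: "eigenvalue (bd P) \<mu>" shows "eigenvalue P \<mu>"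
proof -
  have bP: "bd P \<in> carrier_mat (4*m) (4*m)" using P by simp
  from ev obtain v where v: "v \<in> carrier_vec (4*m)" "v \<noteq> 0\<^sub>v (4*m)" "bd P *\<^sub>v v = \<mu> \<cdot>\<^sub>v v"
    unfolding eigenvalue_def eigenvector_def using bP by auto
  from blk_split[OF v(1)] obtain v1 v2 v3 v4 where c: "v1 \<in> carrier_vec m" "v2 \<in> carrier_vec m"
    "v3 \<in> carrier_vec m" "v4 \<in> carrier_vec m" and vd: "v = blk v1 v2 v3 v4" by blast
  have "blk (P *\<^sub>v v1) (P *\<^sub>v v2) (P *\<^sub>v v3) (P *\<^sub>v v4) = blk (\<mu> \<cdot>\<^sub>v v1) (\<mu> \<cdot>\<^sub>v v2) (\<mu> \<cdot>\<^sub>v v3) (\<mu> \<cdot>\<^sub>v v4)"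
    using v(3) unfolding vd bd_mult[OF P c] blk_smult .
  hence e: "P *\<^sub>v v1 = \<mu> \<cdot>\<^sub>v v1" "P *\<^sub>v v2 = \<mu> \<cdot>\<^sub>v v2" "P *\<^sub>v v3 = \<mu> \<cdot>\<^sub>v v3" "P *\<^sub>v v4 = \<mu> \<cdot>\<^sub>v v4"
    using blk_eq[of "P *\<^sub>v v1" m "P *\<^sub>v v2" "P *\<^sub>v v3" "P *\<^sub>v v4" "\<mu> \<cdot>\<^sub>v v1" "\<mu> \<cdot>\<^sub>v v2" "\<mu> \<cdot>\<^sub>v v3" "\<mu> \<cdot>\<^sub>v v4"] P c by auto
  have "\<not> (v1 = 0\<^sub>v m \<and> v2 = 0\<^sub>v m \<and> v3 = 0\<^sub>v m \<and> v4 = 0\<^sub>v m)"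
  proof
    assume z: "v1 = 0\<^sub>v m \<and> v2 = 0\<^sub>v m \<and> v3 = 0\<^sub>v m \<and> v4 = 0\<^sub>v m"
    have "v \<bullet> v = 0" unfolding vd blk_sp[OF c c] using z by simp
    hence "v = 0\<^sub>v (dim_vec v)" by (rule sp_self_eq0)
    with v(1,2) show False by auto
  qed
  thus ?thesis using e c P unfolding eigenvalue_def eigenvector_def by auto
qed

lemma bd_psd: assumes P: "P \<in> carrier_mat m m" and psd: "\<And>x. x \<in> carrier_vec m \<Longrightarrow> x \<bullet> (P *\<^sub>v x) \<ge> 0"
  and y: "y \<in> carrier_vec (4*m)" shows "y \<bullet> (bd P *\<^sub>v y) \<ge> 0"
proof -
  from blk_split[OF y] obtain y1 y2 y3 y4 where c: "y1 \<in> carrier_vec m" "y2 \<in> carrier_vec m"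
    "y3 \<in> carrier_vec m" "y4 \<in> carrier_vec m" and yd: "y = blk y1 y2 y3 y4" by blast
  have Pc: "P *\<^sub>v y1 \<in> carrier_vec m" "P *\<^sub>v y2 \<in> carrier_vec m" "P *\<^sub>v y3 \<in> carrier_vec m" "P *\<^sub>v y4 \<in> carrier_vec m"
    using P c by auto
  show ?thesis unfolding yd bd_mult[OF P c] blk_sp[OF c Pc] using psd[OF c(1)] psd[OF c(2)] psd[OF c(3)] psd[OF c(4)] by simp
qed

lemma diag4: assumes P: "P \<in> carrier_mat m m" shows "diag_block_mat [P,P,P,P] = bd P"
proof -
  have d1: "diag_block_mat [P,P] = four_block_mat P (0\<^sub>m (dim_row P) (dim_col P)) (0\<^sub>m (dim_row P) (dim_col P)) P"
    using diag_block_mat.simps(2)[of P "[P]"] unfolding diag_block_mat_singleton Let_def .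
  have d2: "diag_block_mat [P,P] = four_block_mat P (0\<^sub>m m m) (0\<^sub>m m m) P" unfolding d1 using P by simp
  have "diag_block_mat [P,P,P,P] = diag_block_mat ([P,P] @ [P,P])" by simp
  also have "\<dots> = bd P" unfolding diag_block_mat_append Let_def d2 bd_def using P by simp
  finally show ?thesis .
qed

lemma smult_bd: assumes P: "P \<in> carrier_mat m m" shows "c \<cdot>\<^sub>m bd P = bd (c \<cdot>\<^sub>m P)"
proof -
  let ?Z = "0\<^sub>m m m :: real mat" let ?ZZ = "0\<^sub>m (m+m) (m+m) :: real mat"
  let ?Q = "four_block_mat P ?Z ?Z P"
  have d: "dim_row P = m" "dim_row (c \<cdot>\<^sub>m P) = m" using P by auto
  have cZ: "?Z \<in> carrier_mat m m" "?ZZ \<in> carrier_mat (m+m) (m+m)" by auto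
  have cQ: "?Q \<in> carrier_mat (m+m) (m+m)" by (intro four_block_carrier_mat P)
  show ?thesis unfolding bd_def Let_def d smult_four_block_mat[OF cQ cZ(2) cZ(2) cQ] smult_four_block_mat[OF P cZ(1) cZ(1) P]
    by simp
qed

lemma core_vec: assumes P: "P \<in> carrier_mat m m" and sym: "transpose_mat P = P"
  and m: "0 < m" and \<alpha>: "0 < \<alpha>" and g1: "g < 1" and g2: "1/2 \<le> g"
  and ev: "\<And>\<mu>. eigenvalue P \<mu> \<Longrightarrow> \<alpha>^2 + \<mu>^2 \<le> g * (\<alpha> + \<mu>)^2"
  and \<sigma>: "\<sigma>^2 * (a^2 + s^2) = 1" and y: "y \<in> carrier_vec (4*m)"
  shows "(\<alpha> \<cdot>\<^sub>v y + \<sigma> \<cdot>\<^sub>v (G0 a s m *\<^sub>v (bd P *\<^sub>v y))) \<bullet> (\<alpha> \<cdot>\<^sub>v y + \<sigma> \<cdot>\<^sub>v (G0 a s m *\<^sub>v (bd P *\<^sub>v y)))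
    \<le> g * ((\<alpha> \<cdot>\<^sub>v y + bd P *\<^sub>v y) \<bullet> (\<alpha> \<cdot>\<^sub>v y + bd P *\<^sub>v y))"
proof -
  have bP: "bd P \<in> carrier_mat (4*m) (4*m)" using P by simp
  have Py: "bd P *\<^sub>v y \<in> carrier_vec (4*m)" using bP y by simp
  have GPy: "G0 a s m *\<^sub>v (bd P *\<^sub>v y) \<in> carrier_vec (4*m)" by (rule mult_mat_vec_carrier[OF G0_carrier Py])
  have "(\<alpha> \<cdot>\<^sub>v y + \<sigma> \<cdot>\<^sub>v (G0 a s m *\<^sub>v (bd P *\<^sub>v y))) \<bullet> (\<alpha> \<cdot>\<^sub>v y + \<sigma> \<cdot>\<^sub>v (G0 a s m *\<^sub>v (bd P *\<^sub>v y)))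
     = \<alpha>^2 * (y \<bullet> y) + 2 * \<alpha> * \<sigma> * (y \<bullet> (G0 a s m *\<^sub>v (bd P *\<^sub>v y))) + \<sigma>^2 * ((a^2 + s^2) * ((bd P *\<^sub>v y) \<bullet> (bd P *\<^sub>v y)))"
    unfolding lin2_sq[OF y GPy] G0_norm[OF Py] ..
  also have "\<dots> = \<alpha>^2 * (y \<bullet> y) + (bd P *\<^sub>v y) \<bullet> (bd P *\<^sub>v y)"
    unfolding G0_bd_orth[OF P sym y] using \<sigma> by (simp add: mult.assoc[symmetric])
  also have "\<dots> \<le> g * (((\<alpha> \<cdot>\<^sub>m 1\<^sub>m (4*m) + bd P) *\<^sub>v y) \<bullet> ((\<alpha> \<cdot>\<^sub>m 1\<^sub>m (4*m) + bd P) *\<^sub>v y))"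
    by (rule quad_ineq[OF bP bd_sym[OF P sym] _ \<alpha> g1 g2 ev[OF bd_eig[OF P]] y], insert m, simp)
  also have "(\<alpha> \<cdot>\<^sub>m 1\<^sub>m (4*m) + bd P) *\<^sub>v y = \<alpha> \<cdot>\<^sub>v y + bd P *\<^sub>v y" by (rule shift_mult(2)[OF bP y])
  finally show ?thesis .
qed

lemma minv_facts: assumes A: "(A::real mat) \<in> carrier_mat n n"
  and inj: "\<And>v. v \<in> carrier_vec n \<Longrightarrow> A *\<^sub>v v = 0\<^sub>v n \<Longrightarrow> v = 0\<^sub>v n"
  shows "A * minv A = 1\<^sub>m n" "minv A * A = 1\<^sub>m n" "minv A \<in> carrier_mat n n"
proof -
  have "det A \<noteq> 0" using det_0_iff_vec_prod_zero_field[OF A] inj by auto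
  from det_non_zero_imp_unit[OF A this] have U: "A \<in> Units (ring_mat TYPE(real) n ())" .
  have "mat_inverse A \<noteq> None"
  proof
    assume "mat_inverse A = None"
    from mat_inverse(1)[OF A this, of "()"] U show False by blast
  qed
  then obtain B where B: "mat_inverse A = Some B" by auto
  from mat_inverse(2)[OF A B] B show "A * minv A = 1\<^sub>m n" "minv A * A = 1\<^sub>m n" "minv A \<in> carrier_mat n n"
    unfolding minv_def by auto
qed

lemma spd_facts: assumes "sym_pos_def_mat m M"
  shows "M \<in> carrier_mat m m" "transpose_mat M = M" "\<And>x. x \<in> carrier_vec m \<Longrightarrow> x \<bullet> (M *\<^sub>v x) \<ge> 0"
    "\<And>\<mu>. eigenvalue M \<mu> \<Longrightarrow> \<mu> > 0"
proof -
  show M: "M \<in> carrier_mat m m" "transpose_mat M = M" using assms unfolding sym_pos_def_mat_def by auto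
  have pd: "\<And>x. x \<in> carrier_vec m \<Longrightarrow> x \<noteq> 0\<^sub>v m \<Longrightarrow> x \<bullet> (M *\<^sub>v x) > 0"
    using assms unfolding sym_pos_def_mat_def by auto
  show "x \<bullet> (M *\<^sub>v x) \<ge> 0" if x: "x \<in> carrier_vec m" for x
  proof (cases "x = 0\<^sub>v m")
    case True thus ?thesis using M by simp
  next
    case False thus ?thesis using pd[OF x] by simp
  qed
  show "\<mu> > 0" if e: "eigenvalue M \<mu>" for \<mu>
  proof -
    from e obtain v where v: "v \<in> carrier_vec m" "v \<noteq> 0\<^sub>v m" "M *\<^sub>v v = \<mu> \<cdot>\<^sub>v v"
      unfolding eigenvalue_def eigenvector_def using M by auto
    have "v \<bullet> (M *\<^sub>v v) = \<mu> * (v \<bullet> v)" unfolding v(3) using v(1) by simp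
    moreover have "v \<bullet> (M *\<^sub>v v) > 0" by (rule pd[OF v(1,2)])
    moreover have "v \<bullet> v \<ge> 0" by (rule sp_self_nonneg)
    ultimately show ?thesis by (auto simp: zero_less_mult_iff)
  qed
qed

lemma inj_shift: assumes P: "(P::real mat) \<in> carrier_mat n n" and psd: "\<And>x. x \<in> carrier_vec n \<Longrightarrow> x \<bullet> (P *\<^sub>v x) \<ge> 0"
  and \<alpha>: "\<alpha> > 0" and v: "v \<in> carrier_vec n" and z: "(\<alpha> \<cdot>\<^sub>m 1\<^sub>m n + P) *\<^sub>v v = 0\<^sub>v n"
  shows "v = 0\<^sub>v n"
proof -
  have "\<alpha> \<cdot>\<^sub>v v + P *\<^sub>v v = 0\<^sub>v n" using z unfolding shift_mult(2)[OF P v] .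
  hence "v \<bullet> (\<alpha> \<cdot>\<^sub>v v + P *\<^sub>v v) = 0" using v by simp
  hence "\<alpha> * (v \<bullet> v) + v \<bullet> (P *\<^sub>v v) = 0" using v P by (simp add: scalar_prod_add_distrib[of v n])
  hence "\<alpha> * (v \<bullet> v) \<le> 0" using psd[OF v] by linarith
  hence "v \<bullet> v = 0" using \<alpha> sp_self_nonneg[of v] by (simp add: mult_le_0_iff)
  from sp_self_eq0[OF this] v show ?thesis by simp
qed

lemma gamma_props: assumes M: "sym_pos_def_mat m M" and m: "0 < m" and \<alpha>: "\<alpha> > 0" and e: "e > 0"
  defines "\<Gamma> \<equiv> Max ((\<lambda>\<mu>. sqrt (\<alpha>^2 + (e * \<mu>)^2) / (\<alpha> + e * \<mu>)) ` spectrum M)"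
  shows "\<Gamma> < 1" "1/2 \<le> \<Gamma>^2" "0 < \<Gamma>"
    "\<And>\<mu>. eigenvalue (e \<cdot>\<^sub>m M) \<mu> \<Longrightarrow> \<alpha>^2 + \<mu>^2 \<le> \<Gamma>^2 * (\<alpha> + \<mu>)^2"
proof -
  note sf = spd_facts[OF M]
  let ?h = "\<lambda>\<mu>. sqrt (\<alpha>^2 + (e * \<mu>)^2) / (\<alpha> + e * \<mu>)"
  have fin: "finite (spectrum M)" by (rule card_finite_spectrum(1)[OF sf(1)])
  have ne: "spectrum M \<noteq> {}"
  proof -
    have "spectrum (map_mat complex_of_real M) \<noteq> {}" by (rule spectrum_non_empty[OF _ m], insert sf(1), auto)
    then obtain z where "eigenvalue (map_mat complex_of_real M) z" unfolding spectrum_def by auto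
    from sym_real_eig[OF sf(1,2) this] show ?thesis unfolding spectrum_def by auto
  qed
  have hprops: "0 < ?h \<mu> \<and> ?h \<mu> < 1 \<and> 1/2 \<le> (?h \<mu>)^2" if mu: "\<mu> \<in> spectrum M" for \<mu>
  proof -
    have "\<mu> > 0" using sf(4) mu unfolding spectrum_def by auto
    hence x: "e * \<mu> > 0" using e by simp
    define x where "x = e * \<mu>"
    have x0: "x > 0" using x unfolding x_def .
    have s: "(sqrt (\<alpha>^2 + x^2))^2 = \<alpha>^2 + x^2" by simp
    have pos: "0 < sqrt (\<alpha>^2 + x^2) / (\<alpha> + x)" using \<alpha> x0 by (simp add: add_pos_pos)
    have "sqrt (\<alpha>^2 + x^2) < \<alpha> + x"
    proof (rule real_less_lsqrt)
      show "0 \<le> \<alpha> + x" using \<alpha> x0 by simp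
      show "\<alpha>^2 + x^2 < (\<alpha> + x)^2" using \<alpha> x0 by (simp add: power2_eq_square algebra_simps)
    qed
    hence lt: "sqrt (\<alpha>^2 + x^2) / (\<alpha> + x) < 1" using \<alpha> x0 by simp
    have "(sqrt (\<alpha>^2 + x^2) / (\<alpha> + x))^2 = (\<alpha>^2 + x^2) / (\<alpha> + x)^2" by (simp add: power_divide)
    moreover have "1/2 \<le> (\<alpha>^2 + x^2) / (\<alpha> + x)^2"
    proof -
      have eq: "2 * (\<alpha>^2 + x^2) - (\<alpha> + x)^2 = (\<alpha> - x)^2" by (simp add: power2_eq_square algebra_simps)
      have "(\<alpha> + x)^2 \<le> 2 * (\<alpha>^2 + x^2)" using eq zero_le_power2[of "\<alpha> - x"] by linarith
      moreover have "(\<alpha> + x)^2 > 0" using \<alpha> x0 by simp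
      ultimately show ?thesis by (simp add: le_divide_eq)
    qed
    ultimately show ?thesis using pos lt unfolding x_def by simp
  qed
  have mem: "\<Gamma> \<in> ?h ` spectrum M" unfolding \<Gamma>_def by (rule Max_in, insert fin ne, auto)
  then obtain \<mu>0 where "\<mu>0 \<in> spectrum M" "\<Gamma> = ?h \<mu>0" by auto
  from hprops[OF this(1)] this(2) show "\<Gamma> < 1" "1/2 \<le> \<Gamma>^2" "0 < \<Gamma>" by auto
  show "\<alpha>^2 + \<mu>^2 \<le> \<Gamma>^2 * (\<alpha> + \<mu>)^2" if ev: "eigenvalue (e \<cdot>\<^sub>m M) \<mu>" for \<mu>
  proof -
    from eig_smult[OF sf(1) _ ev] e have "eigenvalue M (\<mu> / e)" by simp
    hence sp: "\<mu> / e \<in> spectrum M" unfolding spectrum_def by simp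
    hence "?h (\<mu> / e) \<in> ?h ` spectrum M" by (rule imageI)
    hence le: "?h (\<mu> / e) \<le> \<Gamma>" unfolding \<Gamma>_def using fin by (intro Max_ge, auto)
    have em: "e * (\<mu> / e) = \<mu>" using e by simp
    from hprops[OF sp] have h0: "0 < ?h (\<mu> / e)" by simp
    have mu0: "\<mu> / e > 0" using sf(4) sp unfolding spectrum_def by auto
    hence ap: "\<alpha> + \<mu> > 0" using e \<alpha> by (simp add: zero_less_divide_iff)
    have "(?h (\<mu> / e))^2 \<le> \<Gamma>^2" using le h0 by (intro power_mono, auto)
    hence "(\<alpha>^2 + \<mu>^2) / (\<alpha> + \<mu>)^2 \<le> \<Gamma>^2" unfolding em by (simp add: power_divide)
    thus ?thesis using ap by (simp add: divide_le_eq)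
  qed
qed

definition vnorm :: "real vec \<Rightarrow> real" where "vnorm v = sqrt (v \<bullet> v)"

lemma vnorm_ge0: "vnorm v \<ge> 0" unfolding vnorm_def by (simp add: sp_self_nonneg)

lemma vnorm_comp: "i < dim_vec v \<Longrightarrow> \<bar>v $ i\<bar> \<le> vnorm v"
  unfolding vnorm_def using sp_comp_le[of i v] real_sqrt_abs[of "v $ i"] real_sqrt_le_mono by metis

lemma pow_iter: assumes T: "T \<in> carrier_mat n n" shows "x \<in> carrier_vec n \<Longrightarrow> T ^\<^sub>m k *\<^sub>v x = ((\<lambda>x. T *\<^sub>v x) ^^ k) x"
proof (induct k arbitrary: x)
  case 0 thus ?case using T by simp
next
  case (Suc k x)
  have "T ^\<^sub>m Suc k *\<^sub>v x = (T ^\<^sub>m k * T) *\<^sub>v x" by simp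
  also have "\<dots> = T ^\<^sub>m k *\<^sub>v (T *\<^sub>v x)" using T Suc(2) by (intro assoc_mult_mat_vec, auto)
  also have "\<dots> = ((\<lambda>x. T *\<^sub>v x) ^^ k) (T *\<^sub>v x)" using Suc T by simp
  finally show ?case by (simp add: funpow_Suc_right del: funpow.simps)
qed

lemma iter_carrier: assumes T: "T \<in> carrier_mat n n" shows "x \<in> carrier_vec n \<Longrightarrow> ((\<lambda>x. T *\<^sub>v x) ^^ k) x \<in> carrier_vec n"
  by (induct k, insert T, auto)

lemma contr_iter: assumes T: "T \<in> carrier_mat n n" and A: "A \<in> carrier_mat n n"
  and c: "\<And>z. z \<in> carrier_vec n \<Longrightarrow> vnorm (A *\<^sub>v (T *\<^sub>v z)) \<le> g * vnorm (A *\<^sub>v z)" and g: "g \<ge> 0"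
  shows "z \<in> carrier_vec n \<Longrightarrow> vnorm (A *\<^sub>v ((\<lambda>x. T *\<^sub>v x) ^^ k) z) \<le> g^k * vnorm (A *\<^sub>v z)"
proof (induct k)
  case 0 thus ?case by simp
next
  case (Suc k)
  have zk: "((\<lambda>x. T *\<^sub>v x) ^^ k) z \<in> carrier_vec n" by (rule iter_carrier[OF T Suc(2)])
  have "vnorm (A *\<^sub>v ((\<lambda>x. T *\<^sub>v x) ^^ Suc k) z) = vnorm (A *\<^sub>v (T *\<^sub>v ((\<lambda>x. T *\<^sub>v x) ^^ k) z))" by simp
  also have "\<dots> \<le> g * vnorm (A *\<^sub>v ((\<lambda>x. T *\<^sub>v x) ^^ k) z)" by (rule c[OF zk])
  also have "\<dots> \<le> g * (g^k * vnorm (A *\<^sub>v z))" by (rule mult_left_mono[OF Suc(1)[OF Suc(2)] g])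
  finally show ?case by simp
qed

lemma comp_by_norm: assumes A: "(A :: real mat) \<in> carrier_mat n n" and Ai: "Ai \<in> carrier_mat n n" and inv: "Ai * A = 1\<^sub>m n"
  shows "\<exists>Cb \<ge> 0. \<forall>x \<in> carrier_vec n. \<forall>i < n. \<bar>x $ i\<bar> \<le> Cb * vnorm (A *\<^sub>v x)"
proof -
  define Bd where "Bd = (\<Sum>i<n. \<Sum>j<n. \<bar>Ai $$ (i,j)\<bar>)"
  have Bd: "\<bar>Ai $$ (i,j)\<bar> \<le> Bd" if "i < n" "j < n" for i j
  proof -
    have "\<bar>Ai $$ (i,j)\<bar> \<le> (\<Sum>j<n. \<bar>Ai $$ (i,j)\<bar>)" by (rule member_le_sum, insert that, auto)
    also have "\<dots> \<le> Bd" unfolding Bd_def by (rule member_le_sum[of i], insert that, auto intro: sum_nonneg)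
    finally show ?thesis .
  qed
  have Bd0: "Bd \<ge> 0" unfolding Bd_def by (auto intro!: sum_nonneg)
  show ?thesis
  proof (intro exI[of _ "Bd * real n"] conjI ballI allI impI)
    show "0 \<le> Bd * real n" using Bd0 by simp
    fix x :: "real vec" and i assume x: "x \<in> carrier_vec n" and i: "i < n"
    have Ax: "A *\<^sub>v x \<in> carrier_vec n" using A x by simp
    have "x = Ai *\<^sub>v (A *\<^sub>v x)" using assoc_mult_mat_vec[OF Ai A x] inv x by simp
    hence "\<bar>x $ i\<bar> = \<bar>(Ai *\<^sub>v (A *\<^sub>v x)) $ i\<bar>" by simp
    also have "\<dots> \<le> Bd * (\<Sum>j<n. \<bar>(A *\<^sub>v x) $ j\<bar>)" by (rule comp_bound[OF Ai Bd Ax i])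
    also have "\<dots> \<le> Bd * (\<Sum>j<n. vnorm (A *\<^sub>v x))"
      by (rule mult_left_mono[OF sum_mono Bd0], rule vnorm_comp, insert Ax A, auto)
    finally show "\<bar>x $ i\<bar> \<le> Bd * real n * vnorm (A *\<^sub>v x)" by simp
  qed
qed

lemma geom_unbounded: assumes t: "(t::real) > 1" and b: "\<And>k. t^k \<le> C" shows False
proof -
  obtain k :: nat where k: "C / (t - 1) < real k" using reals_Archimedean2 by blast
  have "C < real k * (t - 1)" using k t by (simp add: divide_less_eq)
  also have "\<dots> < 1 + real k * (t - 1)" by simp
  also have "\<dots> \<le> (1 + (t - 1))^k" using t by (intro Bernoulli_inequality) simp
  also have "\<dots> = t^k" by simp
  also have "\<dots> \<le> C" by (rule b)
  finally show False by simp
qed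

theorem theorem1:
  fixes m :: nat and M K :: "real mat" and \<nu> \<omega> \<alpha> :: real
  assumes m: "0 < m"
    and M: "sym_pos_def_mat m M" and K: "sym_pos_def_mat m K"
    and nu: "\<nu> > 0" and alpha: "\<alpha> > 0"
  defines "\<eta> \<equiv> sqrt \<nu> / sqrt (1 + \<nu> * \<omega>^2)"
  defines "\<M> \<equiv> diag_block_mat [M, M, M, M]"
    and "\<K> \<equiv> \<eta> \<cdot>\<^sub>m diag_block_mat [K, K, K, K]"
    and "\<G> \<equiv> G_mat m \<nu> \<omega>"
    and "Imat \<equiv> (1\<^sub>m (4 * m) :: real mat)"
  defines "T \<equiv> minv (\<alpha> \<cdot>\<^sub>m Imat + \<K>) * (\<alpha> \<cdot>\<^sub>m Imat + \<G> * \<M>)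
                 * minv (\<alpha> \<cdot>\<^sub>m Imat + \<M>) * (\<alpha> \<cdot>\<^sub>m Imat - \<G> * \<K>)"
    and "\<gamma> \<equiv> Max ((\<lambda>\<mu>. sqrt (\<alpha>^2 + \<mu>^2) / (\<alpha> + \<mu>)) ` spectrum M)
             * Max ((\<lambda>l. sqrt (\<alpha>^2 + (\<eta> * l)^2) / (\<alpha> + \<eta> * l)) ` spectrum K)"
  shows "spectral_radius (map_mat complex_of_real T) \<le> \<gamma> \<and> \<gamma> < 1 \<and>
    (\<forall>b \<in> carrier_vec (4 * m). \<forall>x0 \<in> carrier_vec (4 * m).
       let f = \<alpha> \<cdot>\<^sub>v ((minv (\<alpha> \<cdot>\<^sub>m Imat + \<K>) * (Imat - \<G>) * minv (\<alpha> \<cdot>\<^sub>m Imat + \<M>)) *\<^sub>v b)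
       in \<forall>i < 4 * m. convergent (\<lambda>k. asss_iterates T f x0 k $ i))"
proof -
  let ?n = "4 * m"
  note Mf = spd_facts[OF M] and Kf = spd_facts[OF K]
  have n0: "0 < ?n" using m by simp
  have eta: "\<eta> > 0" unfolding \<eta>_def using nu by (simp add: add_pos_nonneg)
  define K' where "K' = \<eta> \<cdot>\<^sub>m K"
  have K'c: "K' \<in> carrier_mat m m" unfolding K'_def using Kf(1) by simp
  have K'sym: "transpose_mat K' = K'" unfolding K'_def transpose_smult Kf(2) ..
  have K'psd: "x \<bullet> (K' *\<^sub>v x) \<ge> 0" if x: "x \<in> carrier_vec m" for x
  proof -
    have "x \<bullet> (K' *\<^sub>v x) = \<eta> * (x \<bullet> (K *\<^sub>v x))" unfolding K'_def smult_mult_mat_vec[OF Kf(1) x]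
      using x Kf(1) by simp
    thus ?thesis using Kf(3)[OF x] eta by simp
  qed
  have Mbd: "\<M> = bd M" unfolding \<M>_def by (rule diag4[OF Mf(1)])
  have Kbd: "\<K> = bd K'" unfolding \<K>_def diag4[OF Kf(1)] K'_def by (rule smult_bd[OF Kf(1)])
  define c0 where "c0 = 1 / sqrt (\<nu> * (1 + \<nu> * \<omega>^2))"
  define a where "a = \<omega> * \<nu>"
  define s where "s = sqrt \<nu>"
  have Gd: "\<G> = c0 \<cdot>\<^sub>m G0 a s m" unfolding \<G>_def G_mat_G0 c0_def a_def s_def ..
  have c0sq: "c0^2 * (a^2 + s^2) = 1"
  proof -
    have p: "\<nu> * (1 + \<nu> * \<omega>^2) > 0" using nu by (simp add: add_pos_nonneg)
    have "a^2 + s^2 = \<nu> * (1 + \<nu> * \<omega>^2)" unfolding a_def s_def using nu by (simp add: power2_eq_square algebra_simps)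
    moreover have "c0^2 = 1 / (\<nu> * (1 + \<nu> * \<omega>^2))" unfolding c0_def using p by (simp add: power_divide)
    moreover have "1 + \<nu> * \<omega>^2 > 0" using nu by (simp add: add_pos_nonneg)
    ultimately show ?thesis using p nu by simp
  qed
  have c0sq': "(-c0)^2 * (a^2 + s^2) = 1" using c0sq by simp
  have Gc: "\<G> \<in> carrier_mat ?n ?n" unfolding Gd by simp
  have Mc: "\<M> \<in> carrier_mat ?n ?n" unfolding Mbd using Mf(1) by simp
  have Kc: "\<K> \<in> carrier_mat ?n ?n" unfolding Kbd using K'c by simp
  have GMc: "\<G> * \<M> \<in> carrier_mat ?n ?n" using Gc Mc by simp
  have GKc: "\<G> * \<K> \<in> carrier_mat ?n ?n" using Gc Kc by simp
  define Am where "Am = \<alpha> \<cdot>\<^sub>m Imat + \<K>"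
  define Bm where "Bm = \<alpha> \<cdot>\<^sub>m Imat + \<G> * \<M>"
  define Cm where "Cm = \<alpha> \<cdot>\<^sub>m Imat + \<M>"
  define Dm where "Dm = \<alpha> \<cdot>\<^sub>m Imat - \<G> * \<K>"
  have Amc: "Am \<in> carrier_mat ?n ?n" unfolding Am_def Imat_def using Kc by simp
  have Bmc: "Bm \<in> carrier_mat ?n ?n" unfolding Bm_def Imat_def using GMc by simp
  have Cmc: "Cm \<in> carrier_mat ?n ?n" unfolding Cm_def Imat_def using Mc by simp
  have Dmc: "Dm \<in> carrier_mat ?n ?n" unfolding Dm_def Imat_def using GKc by (intro minus_carrier_mat, auto)
  have Ainv: "Am * minv Am = 1\<^sub>m ?n" "minv Am * Am = 1\<^sub>m ?n" "minv Am \<in> carrier_mat ?n ?n"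
    by (rule minv_facts[OF Amc]; unfold Am_def Imat_def Kbd, rule inj_shift[OF _ bd_psd[OF K'c K'psd] alpha], insert K'c, auto)+
  have Cinv: "Cm * minv Cm = 1\<^sub>m ?n" "minv Cm * Cm = 1\<^sub>m ?n" "minv Cm \<in> carrier_mat ?n ?n"
    by (rule minv_facts[OF Cmc]; unfold Cm_def Imat_def Mbd, rule inj_shift[OF _ bd_psd[OF Mf(1) Mf(3)] alpha], insert Mf(1), auto)+
  have Teq: "T = minv Am * Bm * minv Cm * Dm" unfolding T_def Am_def Bm_def Cm_def Dm_def ..
  have Tc: "T \<in> carrier_mat ?n ?n" unfolding Teq
    by (rule mult_carrier_mat[OF mult_carrier_mat[OF mult_carrier_mat[OF Ainv(3) Bmc] Cinv(3)] Dmc])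
  define \<gamma>1 where "\<gamma>1 = Max ((\<lambda>\<mu>. sqrt (\<alpha>^2 + \<mu>^2) / (\<alpha> + \<mu>)) ` spectrum M)"
  define \<gamma>2 where "\<gamma>2 = Max ((\<lambda>l. sqrt (\<alpha>^2 + (\<eta> * l)^2) / (\<alpha> + \<eta> * l)) ` spectrum K)"
  have \<gamma>eq: "\<gamma> = \<gamma>1 * \<gamma>2" unfolding \<gamma>_def \<gamma>1_def \<gamma>2_def ..
  note GM = gamma_props[OF M m alpha, of 1, simplified]
  note GK = gamma_props[OF K m alpha eta]
  have one_smult: "1 \<cdot>\<^sub>m M = M" by (rule eq_matI, auto)
  have g1: "\<gamma>1 < 1" "1/2 \<le> \<gamma>1^2" "0 < \<gamma>1" "\<And>\<mu>. eigenvalue M \<mu> \<Longrightarrow> \<alpha>^2 + \<mu>^2 \<le> \<gamma>1^2 * (\<alpha> + \<mu>)^2"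
    unfolding \<gamma>1_def using GM one_smult by auto
  have g2: "\<gamma>2 < 1" "1/2 \<le> \<gamma>2^2" "0 < \<gamma>2" "\<And>\<mu>. eigenvalue K' \<mu> \<Longrightarrow> \<alpha>^2 + \<mu>^2 \<le> \<gamma>2^2 * (\<alpha> + \<mu>)^2"
    unfolding \<gamma>2_def K'_def using GK by auto
  have g1sq: "\<gamma>1^2 < 1" using g1(1,3) by (simp add: power_less_one_iff abs_less_iff)
  have g2sq: "\<gamma>2^2 < 1" using g2(1,3) by (simp add: power_less_one_iff abs_less_iff)
  have \<gamma>0: "\<gamma> > 0" unfolding \<gamma>eq using g1 g2 by simp
  have \<gamma>1: "\<gamma> < 1"
  proof -
    have "\<gamma>1 * \<gamma>2 < \<gamma>1 * 1" using g1(3) g2(1) by (intro mult_strict_left_mono)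
    thus ?thesis unfolding \<gamma>eq using g1(1) by simp
  qed
  have coreB: "(Bm *\<^sub>v u) \<bullet> (Bm *\<^sub>v u) \<le> \<gamma>1^2 * ((Cm *\<^sub>v u) \<bullet> (Cm *\<^sub>v u))" if u: "u \<in> carrier_vec ?n" for u
  proof -
    have "Bm *\<^sub>v u = \<alpha> \<cdot>\<^sub>v u + (\<G> * \<M>) *\<^sub>v u" unfolding Bm_def Imat_def by (rule shift_mult(2)[OF GMc u])
    also have "(\<G> * \<M>) *\<^sub>v u = \<G> *\<^sub>v (\<M> *\<^sub>v u)" using Gc Mc u by simp
    also have "\<G> *\<^sub>v (\<M> *\<^sub>v u) = c0 \<cdot>\<^sub>v (G0 a s m *\<^sub>v (bd M *\<^sub>v u))" unfolding Gd Mbd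
      by (rule smult_mult_mat_vec[OF G0_carrier[of a s m] mult_mat_vec_carrier[OF bd_carrier[OF Mf(1)] u]])
    finally have B: "Bm *\<^sub>v u = \<alpha> \<cdot>\<^sub>v u + c0 \<cdot>\<^sub>v (G0 a s m *\<^sub>v (bd M *\<^sub>v u))" .
    have C: "Cm *\<^sub>v u = \<alpha> \<cdot>\<^sub>v u + bd M *\<^sub>v u" unfolding Cm_def Imat_def Mbd by (rule shift_mult(2)[OF _ u], insert Mf(1), simp)
    show ?thesis unfolding B C by (rule core_vec[OF Mf(1) Mf(2) m alpha g1sq g1(2) g1(4) c0sq u])
  qed
  have coreD: "(Dm *\<^sub>v z) \<bullet> (Dm *\<^sub>v z) \<le> \<gamma>2^2 * ((Am *\<^sub>v z) \<bullet> (Am *\<^sub>v z))" if z: "z \<in> carrier_vec ?n" for z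
  proof -
    have "Dm *\<^sub>v z = (\<alpha> \<cdot>\<^sub>m 1\<^sub>m ?n) *\<^sub>v z - (\<G> * \<K>) *\<^sub>v z" unfolding Dm_def Imat_def
      by (rule minus_mult_distrib_mat_vec[OF _ GKc z], simp)
    also have "(\<alpha> \<cdot>\<^sub>m 1\<^sub>m ?n) *\<^sub>v z = \<alpha> \<cdot>\<^sub>v z" by (rule sI_mult_vec[OF z])
    also have "(\<G> * \<K>) *\<^sub>v z = \<G> *\<^sub>v (\<K> *\<^sub>v z)" using Gc Kc z by simp
    also have "\<G> *\<^sub>v (\<K> *\<^sub>v z) = c0 \<cdot>\<^sub>v (G0 a s m *\<^sub>v (bd K' *\<^sub>v z))" unfolding Gd Kbd
      by (rule smult_mult_mat_vec[OF G0_carrier[of a s m] mult_mat_vec_carrier[OF bd_carrier[OF K'c] z]])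
    also have "\<alpha> \<cdot>\<^sub>v z - c0 \<cdot>\<^sub>v (G0 a s m *\<^sub>v (bd K' *\<^sub>v z)) = \<alpha> \<cdot>\<^sub>v z + (-c0) \<cdot>\<^sub>v (G0 a s m *\<^sub>v (bd K' *\<^sub>v z))"
      by (rule eq_vecI, insert z K'c, auto)
    finally have D: "Dm *\<^sub>v z = \<alpha> \<cdot>\<^sub>v z + (-c0) \<cdot>\<^sub>v (G0 a s m *\<^sub>v (bd K' *\<^sub>v z))" .
    have A: "Am *\<^sub>v z = \<alpha> \<cdot>\<^sub>v z + bd K' *\<^sub>v z" unfolding Am_def Imat_def Kbd by (rule shift_mult(2)[OF _ z], insert K'c, simp)
    show ?thesis unfolding D A by (rule core_vec[OF K'c K'sym m alpha g2sq g2(2) g2(4) c0sq' z])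
  qed
  have contr: "vnorm (Am *\<^sub>v (T *\<^sub>v z)) \<le> \<gamma> * vnorm (Am *\<^sub>v z)" if z: "z \<in> carrier_vec ?n" for z
  proof -
    have Dz: "Dm *\<^sub>v z \<in> carrier_vec ?n" using Dmc z by simp
    define u where "u = minv Cm *\<^sub>v (Dm *\<^sub>v z)"
    have u: "u \<in> carrier_vec ?n" unfolding u_def using Cinv(3) Dz by simp
    have Cu: "Cm *\<^sub>v u = Dm *\<^sub>v z" unfolding u_def using assoc_mult_mat_vec[OF Cmc Cinv(3) Dz] Cinv(1) Dz by simp
    have Bu: "Bm *\<^sub>v u \<in> carrier_vec ?n" using Bmc u by simp
    have AB: "minv Am * Bm \<in> carrier_mat ?n ?n" using Ainv(3) Bmc by simp
    have ABC: "minv Am * Bm * minv Cm \<in> carrier_mat ?n ?n" using AB Cinv(3) by simp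
    have "T *\<^sub>v z = (minv Am * Bm * minv Cm) *\<^sub>v (Dm *\<^sub>v z)" unfolding Teq
      by (rule assoc_mult_mat_vec[OF ABC Dmc z])
    also have "\<dots> = (minv Am * Bm) *\<^sub>v u" unfolding u_def by (rule assoc_mult_mat_vec[OF AB Cinv(3) Dz])
    also have "\<dots> = minv Am *\<^sub>v (Bm *\<^sub>v u)" by (rule assoc_mult_mat_vec[OF Ainv(3) Bmc u])
    finally have "T *\<^sub>v z = minv Am *\<^sub>v (Bm *\<^sub>v u)" .
    hence ATz: "Am *\<^sub>v (T *\<^sub>v z) = Bm *\<^sub>v u" using assoc_mult_mat_vec[OF Amc Ainv(3) Bu] Ainv(1) Bu by simp
    have "(Am *\<^sub>v (T *\<^sub>v z)) \<bullet> (Am *\<^sub>v (T *\<^sub>v z)) \<le> \<gamma>1^2 * ((Dm *\<^sub>v z) \<bullet> (Dm *\<^sub>v z))"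
      unfolding ATz using coreB[OF u] unfolding Cu .
    also have "\<dots> \<le> \<gamma>1^2 * (\<gamma>2^2 * ((Am *\<^sub>v z) \<bullet> (Am *\<^sub>v z)))" by (rule mult_left_mono[OF coreD[OF z]], simp)
    also have "\<dots> = \<gamma>^2 * ((Am *\<^sub>v z) \<bullet> (Am *\<^sub>v z))" unfolding \<gamma>eq by (simp add: power_mult_distrib)
    finally have "sqrt ((Am *\<^sub>v (T *\<^sub>v z)) \<bullet> (Am *\<^sub>v (T *\<^sub>v z))) \<le> sqrt (\<gamma>^2 * ((Am *\<^sub>v z) \<bullet> (Am *\<^sub>v z)))"
      by (rule real_sqrt_le_mono)
    thus ?thesis unfolding vnorm_def real_sqrt_mult using \<gamma>0 by simp
  qed
  from comp_by_norm[OF Amc Ainv(3) Ainv(2)] obtain Cb where Cb: "Cb \<ge> 0"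
    and Cbx: "\<And>x i. x \<in> carrier_vec ?n \<Longrightarrow> i < ?n \<Longrightarrow> \<bar>x $ i\<bar> \<le> Cb * vnorm (Am *\<^sub>v x)" by blast
  have bound: "\<bar>((\<lambda>x. T *\<^sub>v x) ^^ k) z $ i\<bar> \<le> Cb * vnorm (Am *\<^sub>v z) * \<gamma>^k" if z: "z \<in> carrier_vec ?n" and i: "i < ?n" for z i k
  proof -
    have "\<bar>((\<lambda>x. T *\<^sub>v x) ^^ k) z $ i\<bar> \<le> Cb * vnorm (Am *\<^sub>v ((\<lambda>x. T *\<^sub>v x) ^^ k) z)"
      by (rule Cbx[OF iter_carrier[OF Tc z] i])
    also have "\<dots> \<le> Cb * (\<gamma>^k * vnorm (Am *\<^sub>v z))"
      by (rule mult_left_mono[OF contr_iter[OF Tc Amc contr _ z] Cb], insert \<gamma>0, auto)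
    finally show ?thesis by (simp add: ac_simps)
  qed
  have part1: "spectral_radius (map_mat complex_of_real T) \<le> \<gamma>"
  proof -
    define Tcx where "Tcx = map_mat complex_of_real T"
    have Tcxc: "Tcx \<in> carrier_mat ?n ?n" unfolding Tcx_def using Tc by simp
    from spectral_radius_mem_max(1)[OF Tcxc n0] obtain lam where lam: "lam \<in> spectrum Tcx"
      and rho: "spectral_radius Tcx = cmod lam" by auto
    from lam obtain v where ev: "eigenvector Tcx v lam" unfolding spectrum_def eigenvalue_def by auto
    hence v: "v \<in> carrier_vec ?n" "v \<noteq> 0\<^sub>v ?n" using Tcxc unfolding eigenvector_def by auto
    then obtain i where i: "i < ?n" "v $ i \<noteq> 0" by (metis carrier_vecD eq_vecI index_zero_vec(1) index_zero_vec(2))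
    define vr where "vr = map_vec Re v"
    define vi where "vi = map_vec Im v"
    have vr: "vr \<in> carrier_vec ?n" and vi: "vi \<in> carrier_vec ?n" unfolding vr_def vi_def using v by auto
    define Cst where "Cst = Cb * vnorm (Am *\<^sub>v vr) + Cb * vnorm (Am *\<^sub>v vi)"
    have grow: "cmod lam ^ k * cmod (v $ i) \<le> Cst * \<gamma>^k" for k
    proof -
      have Tk: "T ^\<^sub>m k \<in> carrier_mat ?n ?n" using Tc by simp
      have "Tcx ^\<^sub>m k *\<^sub>v v = lam^k \<cdot>\<^sub>v v" by (rule eigenvector_pow[OF Tcxc ev])
      moreover have "Tcx ^\<^sub>m k = map_mat complex_of_real (T ^\<^sub>m k)" unfolding Tcx_def
        by (rule of_real_hom.mat_hom_pow[OF Tc, symmetric])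
      ultimately have E: "map_mat complex_of_real (T ^\<^sub>m k) *\<^sub>v v = lam^k \<cdot>\<^sub>v v" by simp
      have "Re ((lam^k \<cdot>\<^sub>v v) $ i) = (T ^\<^sub>m k *\<^sub>v vr) $ i"
        using arg_cong[OF re_mult_vec(1)[OF Tk v(1)], of "\<lambda>w. w $ i"] unfolding E vr_def using i v(1) Tk by simp
      also have "\<dots> = ((\<lambda>x. T *\<^sub>v x) ^^ k) vr $ i" using pow_iter[OF Tc vr] by simp
      finally have re: "Re (lam^k * v $ i) = ((\<lambda>x. T *\<^sub>v x) ^^ k) vr $ i" using i v(1) by simp
      have "Im ((lam^k \<cdot>\<^sub>v v) $ i) = (T ^\<^sub>m k *\<^sub>v vi) $ i"
        using arg_cong[OF re_mult_vec(2)[OF Tk v(1)], of "\<lambda>w. w $ i"] unfolding E vi_def using i v(1) Tk by simp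
      also have "\<dots> = ((\<lambda>x. T *\<^sub>v x) ^^ k) vi $ i" using pow_iter[OF Tc vi] by simp
      finally have im: "Im (lam^k * v $ i) = ((\<lambda>x. T *\<^sub>v x) ^^ k) vi $ i" using i v(1) by simp
      have "cmod lam ^ k * cmod (v $ i) = cmod (lam^k * v $ i)" by (simp add: norm_mult norm_power)
      also have "\<dots> \<le> \<bar>Re (lam^k * v $ i)\<bar> + \<bar>Im (lam^k * v $ i)\<bar>" by (rule cmod_le)
      also have "\<dots> \<le> Cb * vnorm (Am *\<^sub>v vr) * \<gamma>^k + Cb * vnorm (Am *\<^sub>v vi) * \<gamma>^k"
        unfolding re im by (intro add_mono bound[OF vr i(1)] bound[OF vi i(1)])
      finally show ?thesis unfolding Cst_def by (simp add: algebra_simps)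
    qed
    show ?thesis
    proof (rule ccontr)
      assume "\<not> ?thesis"
      hence gt: "cmod lam > \<gamma>" unfolding rho Tcx_def[symmetric] by simp
      define t where "t = cmod lam / \<gamma>"
      have t: "t > 1" unfolding t_def using gt \<gamma>0 by simp
      have vi0: "cmod (v $ i) > 0" using i by simp
      show False
      proof (rule geom_unbounded[OF t])
        fix k
        have "t^k * \<gamma>^k * cmod (v $ i) = cmod lam ^ k * cmod (v $ i)" unfolding t_def using \<gamma>0
          by (simp add: power_divide)
        also have "\<dots> \<le> Cst * \<gamma>^k" by (rule grow)
        finally have "t^k * cmod (v $ i) * \<gamma>^k \<le> (Cst / cmod (v $ i)) * cmod (v $ i) * \<gamma>^k" using vi0 by (simp add: ac_simps)
        hence "t^k * cmod (v $ i) \<le> (Cst / cmod (v $ i)) * cmod (v $ i)" using \<gamma>0 by simp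
        thus "t^k \<le> Cst / cmod (v $ i)" using vi0 by (simp add: le_divide_eq)
      qed
    qed
  qed
  have part3: "\<forall>b \<in> carrier_vec (4 * m). \<forall>x0 \<in> carrier_vec (4 * m).
       let f = \<alpha> \<cdot>\<^sub>v ((minv (\<alpha> \<cdot>\<^sub>m Imat + \<K>) * (Imat - \<G>) * minv (\<alpha> \<cdot>\<^sub>m Imat + \<M>)) *\<^sub>v b)
       in \<forall>i < 4 * m. convergent (\<lambda>k. asss_iterates T f x0 k $ i)"
  proof (intro ballI, unfold Let_def, intro allI impI)
    fix b x0 :: "real vec" and i assume b: "b \<in> carrier_vec ?n" and x0: "x0 \<in> carrier_vec ?n" and i: "i < ?n"
    define f where "f = \<alpha> \<cdot>\<^sub>v ((minv Am * (Imat - \<G>) * minv Cm) *\<^sub>v b)"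
    have IG: "Imat - \<G> \<in> carrier_mat ?n ?n" unfolding Imat_def using Gc by (intro minus_carrier_mat, auto)
    have f: "f \<in> carrier_vec ?n" unfolding f_def smult_carrier_vec
      by (rule mult_mat_vec_carrier[OF mult_carrier_mat[OF mult_carrier_mat[OF Ainv(3) IG] Cinv(3)] b])
    define x where "x = asss_iterates T f x0"
    have xS: "x (Suc k) = T *\<^sub>v x k + f" for k unfolding x_def asss_iterates_def by simp
    have xc: "x k \<in> carrier_vec ?n" for k
      by (induct k, insert x0 f Tc, auto simp: x_def asss_iterates_def)
    define d where "d k = x (Suc k) - x k" for k
    have dc: "d k \<in> carrier_vec ?n" for k unfolding d_def using xc by simp
    have dS: "d (Suc k) = T *\<^sub>v d k" for k
    proof -
      have "T *\<^sub>v d k = T *\<^sub>v x (Suc k) - T *\<^sub>v x k" unfolding d_def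
        by (rule mult_minus_distrib_mat_vec[OF Tc xc xc])
      also have "\<dots> = d (Suc k)" unfolding d_def xS[of "Suc k"] xS[of k]
        by (rule eq_vecI, insert Tc xc f, auto)
      finally show ?thesis ..
    qed
    have dk: "d k = ((\<lambda>x. T *\<^sub>v x) ^^ k) (d 0)" for k by (induct k, auto simp: dS)
    define D0 where "D0 = Cb * vnorm (Am *\<^sub>v d 0)"
    have db: "norm (d k $ i) \<le> D0 * \<gamma>^k" for k
    proof -
      have "d k $ i = ((\<lambda>x. T *\<^sub>v x) ^^ k) (d 0) $ i" using dk[of k] by (rule arg_cong)
      thus ?thesis using bound[OF dc[of 0] i, of k] unfolding D0_def by simp
    qed
    have xsum: "x k $ i = x0 $ i + (\<Sum>j<k. d j $ i)" for k
    proof (induct k)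
      case 0 thus ?case unfolding x_def asss_iterates_def by simp
    next
      case (Suc k)
      have "x (Suc k) $ i = x k $ i + d k $ i" unfolding d_def using xc[of k] xc[of "Suc k"] i by simp
      thus ?case using Suc by simp
    qed
    have summ: "summable (\<lambda>j. d j $ i)"
    proof (rule summable_comparison_test[OF _ summable_mult[OF summable_geometric]])
      show "norm \<gamma> < 1" using \<gamma>0 \<gamma>1 by simp
      show "\<exists>N. \<forall>n\<ge>N. norm (d n $ i) \<le> D0 * \<gamma>^n" using db by blast
    qed
    have "convergent (\<lambda>k. \<Sum>j<k. d j $ i)" using summable_LIMSEQ[OF summ] by (rule convergentI)
    hence "convergent (\<lambda>k. x0 $ i + (\<Sum>j<k. d j $ i))" by (intro convergent_add convergent_const)
    hence "convergent (\<lambda>k. x k $ i)" unfolding xsum .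
    hence "convergent (\<lambda>k. asss_iterates T f x0 k $ i)" unfolding x_def .
    thus "convergent (\<lambda>k. asss_iterates T (\<alpha> \<cdot>\<^sub>v ((minv (\<alpha> \<cdot>\<^sub>m Imat + \<K>) * (Imat - \<G>) * minv (\<alpha> \<cdot>\<^sub>m Imat + \<M>)) *\<^sub>v b)) x0 k $ i)"
      unfolding f_def Am_def Cm_def .
  qed
  show ?thesis using part1 \<gamma>1 part3 by blast
qed

end
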